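(* Let $H$ be a near-quadrangulation and let $G$ be the patch extension of $H$. If a viable 4-coloring $\varphi$ of the boundary of the outer face of $G$ extends to a 4-coloring of $G$, then $\varphi$ is null-homotopic on the cycle $C$ bounding the outer face of $G$.
   Context: A near-quadrangulation is a 2-connected plane graph all of whose faces other than the outer one have length four (it is bipartite). The patch extension of a 2-connected bipartite plane graph $B$ is the hued plane graph obtained by adding into each non-outer face of $B$ a new vertex adjacent to all vertices on the boundary of that face; the vertices of $B$ get hues $0$ and $1$ according to the bipartition and the new vertices get hue $2$. Hues are values in $\mathbb{Z}_3$; a 4-coloring is a proper coloring with colors in $\mathbb{Z}_2^2$; for a hued graph $K$ and 4-coloring $\varphi$, $K^\varphi$ is the graph with both hue and color. Homomorphisms to $\mathbf{T}$ map adjacent vertices to adjacent vertices and preserve hue and color, where the dappled triangular grid $\mathbf{T}$ has vertex set $\mathbb{Z}^2$, with $(i_1,j_1),(i_2,j_2)$ adjacent iff $(i_2-i_1,j_2-j_1)\in\{\pm(1,0),\pm(0,1),\pm(1,1)\}$, hue $(i+j)\bmod 3$ and color $(i\bmod 2,j\bmod 2)$. $\varphi$ is viable on connected hued $K$ if $K^\varphi$ has a homomorphism to $\mathbf{T}$. For a closed walk $Z$, a one-step retraction deletes $u_{i+1},u_{i+2}$ from a cyclically consecutive triple $u_iu_{i+1}u_{i+2}$ with $u_i=u_{i+2}$ (length-two closed walks retract to empty); $Z$ is null-homotopic if repeated one-step retractions reduce it to the empty walk. A viable coloring $\varphi$ is null-homotopic on a closed walk (here the cycle $C$) if the closed walks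 $f(C)$, for homomorphisms $f$ from $C^\varphi$ to $\mathbf{T}$, are null-homotopic. *)

theory Defs
  imports Main
begin

text \<open>A plane graph is given combinatorially by its facial boundary walks:
  C is the boundary walk of the outer face, Fs the set of boundary walks of
  the inner faces (each a list of vertices, read cyclically).\<close>

definition darts :: "'a list \<Rightarrow> ('a \<times> 'a) set" where
  "darts w = {(w ! i, w ! (Suc i mod length w)) | i. i < length w}"

definition map_darts :: "'a list \<Rightarrow> 'a list set \<Rightarrow> ('a \<times> 'a) set" where
  "map_darts C Fs = \<Union> (darts ` insert C Fs)"

definition map_verts :: "'a list \<Rightarrow> 'a list set \<Rightarrow> 'a set" where
  "map_verts C Fs = \<Union> (set ` insert C Fs)"

definition H_adj :: "'a list \<Rightarrow> 'a list set \<Rightarrow> 'a \<Rightarrow> 'a \<Rightarrow> bool" where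
  "H_adj C Fs u v \<longleftrightarrow> (u, v) \<in> map_darts C Fs"

definition connected_on :: "'a set \<Rightarrow> ('a \<Rightarrow> 'a \<Rightarrow> bool) \<Rightarrow> bool" where
  "connected_on S adj \<longleftrightarrow>
     (\<forall>u\<in>S. \<forall>v\<in>S. (\<lambda>a b. a \<in> S \<and> b \<in> S \<and> adj a b)\<^sup>*\<^sup>* u v)"

definition two_connected :: "'a set \<Rightarrow> ('a \<Rightarrow> 'a \<Rightarrow> bool) \<Rightarrow> bool" where
  "two_connected S adj \<longleftrightarrow> finite S \<and> card S \<ge> 3 \<and> connected_on S adj \<and>
     (\<forall>x\<in>S. connected_on (S - {x}) adj)"

text \<open>Rotation at vertex v: from neighbour u to neighbour z, where the face
  containing dart (u,v) continues with dart (v,z).\<close>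
definition rotation_step :: "'a list \<Rightarrow> 'a list set \<Rightarrow> 'a \<Rightarrow> 'a \<Rightarrow> 'a \<Rightarrow> bool" where
  "rotation_step C Fs v u z \<longleftrightarrow>
     (\<exists>w\<in>insert C Fs. (u, v) \<in> darts w \<and> (v, z) \<in> darts w)"

text \<open>Combinatorial map of a connected simple plane graph whose faces are
  bounded by cycles: each dart lies on exactly one facial walk, the dart set
  is symmetric, the rotation at every vertex is a single cycle (so the
  surface is a closed surface), the graph is connected and Euler's formula
  V - E + F = 2 holds (so the surface is the sphere).\<close>
definition plane_map :: "'a list \<Rightarrow> 'a list set \<Rightarrow> bool" where
  "plane_map C Fs \<longleftrightarrow>
     finite Fs \<and> distinct C \<and> length C \<ge> 3 \<and>
     (\<forall>f\<in>Fs. distinct f \<and> length f \<ge> 3) \<and>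
     (\<forall>f\<in>Fs. darts f \<inter> darts C = {}) \<and>
     (\<forall>f\<in>Fs. \<forall>g\<in>Fs. f \<noteq> g \<longrightarrow> darts f \<inter> darts g = {}) \<and>
     (\<forall>u v. (u, v) \<in> map_darts C Fs \<longrightarrow> (v, u) \<in> map_darts C Fs) \<and>
     (\<forall>v\<in>map_verts C Fs. \<forall>u z. H_adj C Fs v u \<and> H_adj C Fs v z \<longrightarrow>
         (rotation_step C Fs v)\<^sup>*\<^sup>* u z) \<and>
     connected_on (map_verts C Fs) (H_adj C Fs) \<and>
     int (card (map_verts C Fs)) - int (card (map_darts C Fs) div 2)
       + int (card Fs + 1) = 2"

definition near_quadrangulation :: "'a list \<Rightarrow> 'a list set \<Rightarrow> bool" where
  "near_quadrangulation C Fs \<longleftrightarrow>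
     plane_map C Fs \<and> (\<forall>f\<in>Fs. length f = 4) \<and>
     two_connected (map_verts C Fs) (H_adj C Fs)"

definition hue_bipartition :: "'a list \<Rightarrow> 'a list set \<Rightarrow> ('a \<Rightarrow> int) \<Rightarrow> bool" where
  "hue_bipartition C Fs h \<longleftrightarrow>
     (\<forall>v\<in>map_verts C Fs. h v \<in> {0, 1}) \<and>
     (\<forall>u v. H_adj C Fs u v \<longrightarrow> h u \<noteq> h v)"

definition patch_verts :: "'a list \<Rightarrow> 'a list set \<Rightarrow> ('a + 'a list) set" where
  "patch_verts C Fs = Inl ` map_verts C Fs \<union> Inr ` Fs"

definition patch_adj :: "'a list \<Rightarrow> 'a list set \<Rightarrow> ('a + 'a list) \<Rightarrow> ('a + 'a list) \<Rightarrow> bool" where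
  "patch_adj C Fs x y =
     (case (x, y) of
        (Inl u, Inl v) \<Rightarrow> H_adj C Fs u v
      | (Inl u, Inr f) \<Rightarrow> f \<in> Fs \<and> u \<in> set f
      | (Inr f, Inl u) \<Rightarrow> f \<in> Fs \<and> u \<in> set f
      | (Inr f, Inr g) \<Rightarrow> False)"

definition patch_hue :: "('a \<Rightarrow> int) \<Rightarrow> ('a + 'a list) \<Rightarrow> int" where
  "patch_hue h x = (case x of Inl v \<Rightarrow> h v | Inr f \<Rightarrow> 2)"

text \<open>Colors in Z_2^2 are represented as pairs in {0,1} x {0,1}.\<close>
definition four_coloring :: "'b set \<Rightarrow> ('b \<Rightarrow> 'b \<Rightarrow> bool) \<Rightarrow> ('b \<Rightarrow> int \<times> int) \<Rightarrow> bool" where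
  "four_coloring S adj c \<longleftrightarrow>
     (\<forall>x\<in>S. c x \<in> {0, 1} \<times> {0, 1}) \<and> (\<forall>x\<in>S. \<forall>y\<in>S. adj x y \<longrightarrow> c x \<noteq> c y)"

definition cycle_adj :: "'a list \<Rightarrow> 'a \<Rightarrow> 'a \<Rightarrow> bool" where
  "cycle_adj C u v \<longleftrightarrow> (u, v) \<in> darts C \<or> (v, u) \<in> darts C"

definition T_adj :: "int \<times> int \<Rightarrow> int \<times> int \<Rightarrow> bool" where
  "T_adj p q \<longleftrightarrow>
     (fst q - fst p, snd q - snd p) \<in> {(1, 0), (-1, 0), (0, 1), (0, -1), (1, 1), (-1, -1)}"

definition T_hue :: "int \<times> int \<Rightarrow> int" where
  "T_hue p = (fst p + snd p) mod 3"

definition T_col :: "int \<times> int \<Rightarrow> int \<times> int" where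
  "T_col p = (fst p mod 2, snd p mod 2)"

definition hom_to_T :: "'b set \<Rightarrow> ('b \<Rightarrow> 'b \<Rightarrow> bool) \<Rightarrow> ('b \<Rightarrow> int) \<Rightarrow> ('b \<Rightarrow> int \<times> int)
    \<Rightarrow> ('b \<Rightarrow> int \<times> int) \<Rightarrow> bool" where
  "hom_to_T S adj hue col f \<longleftrightarrow>
     (\<forall>x\<in>S. \<forall>y\<in>S. adj x y \<longrightarrow> T_adj (f x) (f y)) \<and>
     (\<forall>x\<in>S. T_hue (f x) = hue x \<and> T_col (f x) = col x)"

definition viable :: "'b set \<Rightarrow> ('b \<Rightarrow> 'b \<Rightarrow> bool) \<Rightarrow> ('b \<Rightarrow> int) \<Rightarrow> ('b \<Rightarrow> int \<times> int) \<Rightarrow> bool" where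
  "viable S adj hue col \<longleftrightarrow> (\<exists>f. hom_to_T S adj hue col f)"

text \<open>A closed walk is a list read cyclically.  A one-step retraction removes
  u_{i+1}, u_{i+2} from a cyclically consecutive triple u_i u_{i+1} u_{i+2} with
  u_i = u_{i+2} (rotations express cyclicity); length-two walks retract to the
  empty walk.  nullhom Z holds iff repeated retractions reduce Z to [].\<close>
inductive nullhom :: "'c list \<Rightarrow> bool" where
  nh_nil: "nullhom []"
| nh_two: "nullhom [a, b]"
| nh_step: "nullhom (a # rest) \<Longrightarrow> nullhom (rotate k (a # b # a # rest))"

definition null_homotopic_on_cycle :: "'a list \<Rightarrow> ('a \<Rightarrow> int) \<Rightarrow> ('a \<Rightarrow> int \<times> int) \<Rightarrow> bool" where
  "null_homotopic_on_cycle C hue col \<longleftrightarrow>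
     (\<forall>f. hom_to_T (set C) (cycle_adj C) hue col f \<longrightarrow> nullhom (map f C))"

end

theory Submission
  imports Defs
begin

definition pushw :: "'c \<Rightarrow> 'c list \<Rightarrow> 'c list" where
  "pushw y s = (if 2 \<le> length s \<and> s ! (length s - 2) = y then butlast s else s @ [y])"

definition redw :: "'c list \<Rightarrow> 'c list" where
  "redw xs = foldl (\<lambda>s y. pushw y s) [] xs"

definition reducedw :: "'c list \<Rightarrow> bool" where
  "reducedw s \<longleftrightarrow> (\<forall>i. i + 2 < length s \<longrightarrow> s ! i \<noteq> s ! (i + 2))"

lemma pushw_pop: "2 \<le> length s \<Longrightarrow> s ! (length s - 2) = y \<Longrightarrow> pushw y s = butlast s"
  by (simp add: pushw_def)

lemma pushw_push: "\<not> (2 \<le> length s \<and> s ! (length s - 2) = y) \<Longrightarrow> pushw y s = s @ [y]"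
  unfolding pushw_def by argo

lemma redw_append: "redw (xs @ ys) = foldl (\<lambda>s y. pushw y s) (redw xs) ys"
  by (simp add: redw_def)

lemma redw_snoc: "redw (xs @ [y]) = pushw y (redw xs)"
  by (simp add: redw_def)

lemma redw_Nil[simp]: "redw [] = []" by (simp add: redw_def)

lemma butlast_ne2: "2 \<le> length s \<Longrightarrow> butlast s \<noteq> []"
  by (cases s rule: rev_cases) auto

lemma last_butlast2: "2 \<le> length s \<Longrightarrow> last (butlast s) = s ! (length s - 2)"
proof -
  assume h: "2 \<le> length s"
  have "last (butlast s) = butlast s ! (length (butlast s) - 1)"
    using butlast_ne2[OF h] by (simp add: last_conv_nth)
  also have "\<dots> = s ! (length s - 2)" using h by (simp add: nth_butlast numeral_2_eq_2)
  finally show ?thesis .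
qed

lemma pushw_ne: "pushw y s \<noteq> []"
  by (simp add: pushw_def butlast_ne2)

lemma last_pushw: "last (pushw y s) = y"
  by (simp add: pushw_def last_butlast2)

lemma reduced_pushw: "reducedw s \<Longrightarrow> reducedw (pushw y s)"
proof (cases "2 \<le> length s \<and> s ! (length s - 2) = y")
  case True
  assume r: "reducedw s"
  have "reducedw (butlast s)" unfolding reducedw_def
  proof (intro allI impI)
    fix i assume "i + 2 < length (butlast s)"
    then show "butlast s ! i \<noteq> butlast s ! (i + 2)"
      using r unfolding reducedw_def by (simp add: nth_butlast)
  qed
  then show ?thesis using True by (simp add: pushw_def)
next
  case False
  assume r: "reducedw s"
  have "reducedw (s @ [y])" unfolding reducedw_def
  proof (intro allI impI)
    fix i assume i: "i + 2 < length (s @ [y])"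
    show "(s @ [y]) ! i \<noteq> (s @ [y]) ! (i + 2)"
    proof (cases "i + 2 < length s")
      case True then show ?thesis using r unfolding reducedw_def by (simp add: nth_append)
    next
      case False
      then have "i + 2 = length s" using i by simp
      moreover then have "i = length s - 2" by simp
      ultimately show ?thesis using \<open>\<not> (2 \<le> length s \<and> s ! (length s - 2) = y)\<close>
        by (simp add: nth_append)
    qed
  qed
  then show ?thesis using False by (auto simp: pushw_def)
qed

lemma reduced_redw: "reducedw (redw xs)"
proof (induction xs rule: rev_induct)
  case Nil then show ?case by (simp add: reducedw_def)
next
  case (snoc x xs) then show ?case by (simp add: redw_snoc reduced_pushw)
qed

lemma last_redw: "xs \<noteq> [] \<Longrightarrow> redw xs \<noteq> [] \<and> last (redw xs) = last xs"
  by (induction xs rule: rev_induct) (auto simp: redw_snoc pushw_ne last_pushw)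

lemma redw_ins_aux:
  assumes "reducedw S" "S \<noteq> []" "last S = a"
  shows "pushw a (pushw b S) = S"
proof (cases "2 \<le> length S \<and> S ! (length S - 2) = b")
  case True
  then have 1: "pushw b S = butlast S" by (simp add: pushw_def)
  have "\<not> (2 \<le> length (butlast S) \<and> butlast S ! (length (butlast S) - 2) = a)"
  proof
    assume h: "2 \<le> length (butlast S) \<and> butlast S ! (length (butlast S) - 2) = a"
    have "3 \<le> length S" using h[THEN conjunct1] by simp
    then have "length S - 3 < length (butlast S)" by simp
    then have "S ! (length S - 3) = a" using h by (simp add: nth_butlast numeral_3_eq_3)
    moreover have "S ! (length S - 1) = a" using assms by (simp add: last_conv_nth)
    moreover have "length S - 3 + 2 < length S" using \<open>3 \<le> length S\<close> by simp
    moreover have "length S - 3 + 2 = length S - 1" using \<open>3 \<le> length S\<close> by simp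
    ultimately show False using assms(1) unfolding reducedw_def by metis
  qed
  then have "pushw a (butlast S) = butlast S @ [a]" by (rule pushw_push)
  also have "\<dots> = S" using assms by (simp add: snoc_eq_iff_butlast)
  finally show ?thesis using 1 by simp
next
  case False
  then have "pushw b S = S @ [b]" by (rule pushw_push)
  moreover have "(S @ [b]) ! (length (S @ [b]) - 2) = a" using assms
    by (simp add: nth_append last_conv_nth)
  moreover have "2 \<le> length (S @ [b])" using assms by (cases S) auto
  ultimately show ?thesis by (simp add: pushw_def)
qed

lemma redw_ins:
  assumes "P \<noteq> []" "last P = a"
  shows "redw (P @ [b, a] @ Q) = redw (P @ Q)"
proof -
  have "redw (P @ [b, a]) = redw P"
    using redw_ins_aux[OF reduced_redw[of P]] last_redw[OF assms(1)] assms(2)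
    by (simp add: redw_append)
  then show ?thesis
    by (metis append.assoc redw_append)
qed

lemma redw_mid: "redw (A @ M) = redw (A @ redw M)"
proof (induction M rule: rev_induct)
  case Nil then show ?case by simp
next
  case (snoc y M)
  have "redw (A @ M @ [y]) = pushw y (redw (A @ redw M))"
    using snoc by (metis append.assoc redw_snoc)
  also have "\<dots> = redw (A @ redw M @ [y])" by (metis append.assoc redw_snoc)
  also have "\<dots> = redw (A @ pushw y (redw M))"
  proof (cases "2 \<le> length (redw M) \<and> redw M ! (length (redw M) - 2) = y")
    case True
    define S where "S = redw M"
    have S2: "2 \<le> length S" "S ! (length S - 2) = y" using True S_def by auto
    have eq: "S = butlast S @ [last S]" using S2 by (cases S rule: rev_cases) auto
    have lb: "butlast S \<noteq> [] \<and> last (butlast S) = y" using S2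
      by (simp add: butlast_ne2 last_butlast2)
    have "redw (A @ S @ [y]) = redw ((A @ butlast S) @ [last S, y] @ [])"
      by (subst eq) simp
    also have "\<dots> = redw (A @ butlast S)"
      using redw_ins[of "A @ butlast S" y "last S" "[]"] lb by simp
    also have "pushw y S = butlast S" using S2 by (simp add: pushw_def)
    ultimately show ?thesis by (simp add: S_def)
  next
    case False then show ?thesis by (auto simp: pushw_def)
  qed
  also have "\<dots> = redw (A @ redw (M @ [y]))" by (simp add: redw_snoc)
  finally show ?case by simp
qed

lemma reducedw_redw_id: "reducedw s \<Longrightarrow> redw s = s"
proof (induction s rule: rev_induct)
  case Nil then show ?case by simp
next
  case (snoc x xs)
  have r: "reducedw xs" unfolding reducedw_def
  proof (intro allI impI)
    fix i assume i: "i + 2 < length xs"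
    then have "(xs @ [x]) ! i \<noteq> (xs @ [x]) ! (i + 2)" using snoc.prems unfolding reducedw_def by simp
    then show "xs ! i \<noteq> xs ! (i + 2)" using i by (simp add: nth_append)
  qed
  have "\<not> (2 \<le> length xs \<and> xs ! (length xs - 2) = x)"
  proof
    assume h: "2 \<le> length xs \<and> xs ! (length xs - 2) = x"
    have e: "length xs - 2 + 2 = length xs" using h[THEN conjunct1] by simp
    have "(xs @ [x]) ! (length xs - 2) = x" using h[THEN conjunct1] h[THEN conjunct2] by (simp add: nth_append)
    moreover have "(xs @ [x]) ! (length xs - 2 + 2) = x" using e by (simp add: nth_append)
    ultimately have "(xs @ [x]) ! (length xs - 2) = (xs @ [x]) ! (length xs - 2 + 2)" by simp
    moreover have "length xs - 2 + 2 < length (xs @ [x])" using e by simp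
    ultimately show False using snoc.prems unfolding reducedw_def by blast
  qed
  then show ?case using snoc.IH[OF r] by (simp add: redw_snoc pushw_push)
qed

lemma len_le2_cases: "length xs \<le> 2 \<Longrightarrow> xs = [] \<or> (\<exists>a. xs = [a]) \<or> (\<exists>a b. xs = [a, b])"
  by (cases xs; cases "tl xs"; auto)

lemma len_ge3_eq: "3 \<le> length xs \<Longrightarrow> xs = xs ! 0 # xs ! 1 # xs ! 2 # drop 3 xs"
  by (cases xs; cases "tl xs"; cases "tl (tl xs)"; auto simp: numeral_3_eq_3)

definition NH :: "'c list \<Rightarrow> bool" where
  "NH Z \<longleftrightarrow> Z = [] \<or> redw (Z @ [hd Z]) = [hd Z]"

lemma NH_rotate1: "NH Z \<Longrightarrow> NH (rotate1 Z)"
proof (cases Z)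
  case Nil then show ?thesis by (simp add: NH_def)
next
  case (Cons z0 Y)
  assume nh: "NH Z"
  show ?thesis
  proof (cases Y)
    case Nil then show ?thesis using nh Cons by simp
  next
    case (Cons y1 Y')
    have M: "redw (Z @ [z0]) = [z0]" using nh \<open>Z = z0 # Y\<close> by (simp add: NH_def)
    have "redw ([y1] @ [z0, y1] @ (Y' @ [z0, y1])) = redw ([y1] @ (Y' @ [z0, y1]))"
      by (rule redw_ins) auto
    moreover have "redw ([y1] @ [z0, y1] @ (Y' @ [z0, y1])) = redw (([y1] @ (Z @ [z0])) @ [y1])"
      using \<open>Z = z0 # Y\<close> Cons by simp
    moreover have "redw (([y1] @ (Z @ [z0])) @ [y1]) = pushw y1 (redw ([y1] @ redw (Z @ [z0])))"
      by (subst redw_snoc) (subst redw_mid, rule refl)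
    moreover have "redw ([y1] @ [z0]) = [y1, z0]" by (simp add: redw_def pushw_def)
    moreover have "pushw y1 [y1, z0] = [y1]" by (simp add: pushw_def)
    moreover have "pushw y1 (redw ([y1] @ redw (Z @ [z0]))) = [y1]"
      using M calculation(4,5) by simp
    ultimately have "redw (y1 # Y' @ [z0, y1]) = [y1]" by simp
    then show ?thesis using \<open>Z = z0 # Y\<close> Cons by (simp add: NH_def)
  qed
qed

lemma NH_rotate: "NH Z \<Longrightarrow> NH (rotate k Z)"
  by (induction k) (auto simp: NH_rotate1)

lemma NH_cancel: "NH (a # b # a # rest) \<Longrightarrow> NH (a # rest)"
proof -
  assume "NH (a # b # a # rest)"
  then have "redw ([a] @ [b, a] @ (rest @ [a])) = [a]" by (simp add: NH_def)
  moreover have "redw ([a] @ [b, a] @ (rest @ [a])) = redw ([a] @ (rest @ [a]))"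
    by (rule redw_ins) auto
  ultimately show ?thesis by (simp add: NH_def)
qed

lemma NH_expand: "NH (a # rest) \<Longrightarrow> NH (a # b # a # rest)"
proof -
  assume "NH (a # rest)"
  then have "redw ([a] @ (rest @ [a])) = [a]" by (simp add: NH_def)
  moreover have "redw ([a] @ [b, a] @ (rest @ [a])) = redw ([a] @ (rest @ [a]))"
    by (rule redw_ins) auto
  ultimately show ?thesis by (simp add: NH_def)
qed

lemma nullhom_NH: "nullhom Z \<Longrightarrow> NH Z"
proof (induction rule: nullhom.induct)
  case nh_nil then show ?case by (simp add: NH_def)
next
  case (nh_two a b) then show ?case by (simp add: NH_def redw_def pushw_def)
next
  case (nh_step a rest k b)
  have "NH (a # b # a # rest)" by (rule NH_expand) (rule nh_step.IH)
  then show ?case by (rule NH_rotate)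
qed

lemma NH_nullhom: "NH Z \<Longrightarrow> nullhom Z"
proof (induction "length Z" arbitrary: Z rule: less_induct)
  case less
  show ?case
  proof (cases "length Z \<le> 2")
    case True
    then consider "Z = []" | z where "Z = [z]" | a b where "Z = [a, b]"
      using len_le2_cases by blast
    then show ?thesis
    proof cases
      case 1 then show ?thesis by (simp add: nh_nil)
    next
      case 2 then have "redw (Z @ [hd Z]) = [z, z]" by (simp add: redw_def pushw_def)
      then show ?thesis using less.prems 2 by (simp add: NH_def)
    next
      case 3 then show ?thesis by (simp add: nh_two)
    qed
  next
    case False
    define n where "n = length Z"
    define w where "w = Z @ [hd Z]"
    have Zne: "Z \<noteq> []" using False by auto
    have rw: "redw w = [hd Z]" using less.prems Zne by (simp add: NH_def w_def)
    have "\<not> reducedw w"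
    proof
      assume "reducedw w"
      then have "redw w = w" by (rule reducedw_redw_id)
      then show False using rw False by (simp add: w_def)
    qed
    then obtain i where i: "i + 2 < length w" "w ! i = w ! (i + 2)" unfolding reducedw_def by auto
    have iln: "i < n" "i + 2 \<le> n" using i by (auto simp: w_def n_def)
    have wi: "w ! i = Z ! i" using iln by (simp add: w_def nth_append n_def)
    have wi2: "w ! (i + 2) = Z ! ((i + 2) mod n)"
    proof (cases "i + 2 < n")
      case True then show ?thesis by (simp add: w_def nth_append n_def)
    next
      case False then have "i + 2 = n" using iln by simp
      then show ?thesis using Zne by (simp add: w_def nth_append n_def hd_conv_nth)
    qed
    define X where "X = rotate i Z"
    have lX: "length X = n" by (simp add: X_def n_def)
    have "3 \<le> length X" using lX n_def False by simp
    then have "X = X ! 0 # X ! 1 # X ! 2 # drop 3 X" by (rule len_ge3_eq)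
    then obtain a b c r where Xeq: "X = a # b # c # r" by blast
    have "X ! 0 = Z ! i" unfolding X_def by (subst nth_rotate) (use iln n_def in auto)
    then have X0: "a = Z ! i" using Xeq by simp
    have "X ! 2 = Z ! ((i + 2) mod n)" using False by (simp add: X_def nth_rotate n_def add.commute)
    then have X2: "c = Z ! ((i + 2) mod n)" using Xeq by simp
    have X02: "c = a" using X0 X2 i wi wi2 by simp
    have "NH X" using less.prems by (simp add: X_def NH_rotate)
    then have "NH (a # b # a # r)" using Xeq X02 by simp
    then have "NH (a # r)" by (rule NH_cancel)
    moreover have "length (a # r) < length Z" using lX n_def Xeq by simp
    ultimately have nh: "nullhom (a # r)" using less.hyps by blast
    have nh2: "nullhom (rotate (n - i) (a # b # a # r))" by (rule nh_step[OF nh])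
    have "rotate (n - i) X = Z"
      using iln by (simp add: X_def rotate_rotate n_def)
    then have e: "rotate (n - i) (a # b # a # r) = Z" unfolding Xeq X02 .
    show ?thesis using nh2 unfolding e .
  qed
qed

lemma nullhom_rotate: "nullhom Z \<Longrightarrow> nullhom (rotate k Z)"
  by (rule NH_nullhom, rule NH_rotate, rule nullhom_NH)

lemma nullhom_cancel: "nullhom (a # b # a # rest) \<Longrightarrow> nullhom (a # rest)"
  by (rule NH_nullhom, rule NH_cancel, rule nullhom_NH)

lemma rotate_back: "xs \<noteq> [] \<Longrightarrow> rotate (length xs - k mod length xs) (rotate k xs) = xs"
proof -
  assume ne: "xs \<noteq> []"
  define L where "L = length xs"
  have L0: "0 < L" using ne by (simp add: L_def)
  have km: "k mod L \<le> L" using L0 by (simp add: order_less_imp_le)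
  have "(L - k mod L + k) mod L = (L - k mod L + k mod L) mod L" by (simp add: mod_add_right_eq)
  also have "\<dots> = 0" using km by simp
  finally have "(L - k mod L + k) mod L = 0" .
  then show ?thesis by (simp add: rotate_rotate rotate_id L_def)
qed

lemma nullhom_rotate_iff: "nullhom (rotate k Z) \<longleftrightarrow> nullhom Z"
proof
  assume h: "nullhom (rotate k Z)"
  show "nullhom Z"
  proof (cases "Z = []")
    case True then show ?thesis by (simp add: nh_nil)
  next
    case False
    have "nullhom (rotate (length Z - k mod length Z) (rotate k Z))" using nullhom_rotate[OF h] .
    then show ?thesis using rotate_back[OF False] by simp
  qed
qed (rule nullhom_rotate)


definition dl :: "'a list \<Rightarrow> ('a \<times> 'a) list" where
  "dl w = zip w (rotate1 w)"

lemma darts_dl: "darts w = set (dl w)"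
proof -
  have "set (dl w) = {(w ! i, rotate1 w ! i) | i. i < length w}"
    by (simp add: dl_def set_zip)
  also have "\<dots> = darts w"
    unfolding darts_def by (auto simp: nth_rotate1)
  finally show ?thesis by simp
qed

lemma zip_rotate1: "length a = length b \<Longrightarrow> zip (rotate1 a) (rotate1 b) = rotate1 (zip a b)"
  by (cases a; cases b) auto

lemma dl_rotate1: "dl (rotate1 w) = rotate1 (dl w)"
  unfolding dl_def by (simp add: zip_rotate1)

lemma dl_rotate: "dl (rotate k w) = rotate k (dl w)"
  by (induction k) (simp_all add: dl_rotate1)

lemma set_dl_rotate[simp]: "set (dl (rotate k w)) = set (dl w)"
  by (simp add: dl_rotate)

lemma distinct_dl_rotate[simp]: "distinct (dl (rotate k w)) = distinct (dl w)"
  by (simp add: dl_rotate)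

lemma length_dl[simp]: "length (dl w) = length w"
  by (simp add: dl_def)

lemma dl_Cons2: "dl (x # y # r) = (x, y) # zip (y # r) (r @ [x])"
  by (simp add: dl_def)

lemma dl_Cons: "dl (x # r) = zip (x # r) (r @ [x])"
  by (simp add: dl_def)

section \<open>Lifting from the quotient to T\<close>

definition tp :: "int \<times> int \<Rightarrow> int \<times> (int \<times> int)" where
  "tp p = (T_hue p, T_col p)"

definition cwT :: "(int \<times> int) list \<Rightarrow> bool" where
  "cwT Z \<longleftrightarrow> (\<forall>p\<in>set (dl Z). T_adj (fst p) (snd p))"

lemma T_arith:
  fixes x1 x2 y1 y2 z1 z2 :: int
  assumes h: "(x1 + x2) mod 3 = (z1 + z2) mod 3" "x1 mod 2 = z1 mod 2" "x2 mod 2 = z2 mod 2"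
  and a1: "(y1 - x1, y2 - x2) \<in> {(1, 0), (-1, 0), (0, 1), (0, -1), (1, 1), (-1, -1)}"
  and a2: "(z1 - y1, z2 - y2) \<in> {(1, 0), (-1, 0), (0, 1), (0, -1), (1, 1), (-1, -1)}"
  shows "x1 = z1 \<and> x2 = z2"
proof -
  have b1: "-1 \<le> y1 - x1" "y1 - x1 \<le> 1" "-1 \<le> y2 - x2" "y2 - x2 \<le> 1" "-1 \<le> (y1 - x1) - (y2 - x2)" "(y1 - x1) - (y2 - x2) \<le> 1"
    using a1 by auto
  have b2: "-1 \<le> z1 - y1" "z1 - y1 \<le> 1" "-1 \<le> z2 - y2" "z2 - y2 \<le> 1" "-1 \<le> (z1 - y1) - (z2 - y2)" "(z1 - y1) - (z2 - y2) \<le> 1"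
    using a2 by auto
  have "3 dvd (z1 + z2) - (x1 + x2)" using h(1)[symmetric] by (simp add: mod_eq_dvd_iff)
  then obtain c where c: "(z1 + z2) - (x1 + x2) = 3 * c" by (elim dvdE) blast
  have "2 dvd z1 - x1" using h(2)[symmetric] by (simp add: mod_eq_dvd_iff)
  then obtain a where a: "z1 - x1 = 2 * a" by (elim dvdE) blast
  have "2 dvd z2 - x2" using h(3)[symmetric] by (simp add: mod_eq_dvd_iff)
  then obtain b where b: "z2 - x2 = 2 * b" by (elim dvdE) blast
  have "-1 \<le> a" "a \<le> 1" "-1 \<le> b" "b \<le> 1" "-1 \<le> a - b" "a - b \<le> 1" "2 * a + 2 * b = 3 * c"
    using a b c b1 b2 by linarith+
  then have "a = 0 \<and> b = 0" by presburger
  then show ?thesis using a b by simp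
qed

lemma T_key:
  assumes "T_adj x y" "T_adj y z" "tp x = tp z"
  shows "x = z"
proof -
  obtain x1 x2 where x: "x = (x1, x2)" by (cases x)
  obtain y1 y2 where y: "y = (y1, y2)" by (cases y)
  obtain z1 z2 where z: "z = (z1, z2)" by (cases z)
  have h: "(x1 + x2) mod 3 = (z1 + z2) mod 3" "x1 mod 2 = z1 mod 2" "x2 mod 2 = z2 mod 2"
    using assms(3) by (auto simp: tp_def T_hue_def T_col_def x z)
  have a1: "(y1 - x1, y2 - x2) \<in> {(1, 0), (-1, 0), (0, 1), (0, -1), (1, 1), (-1, -1)}"
    using assms(1) by (simp add: T_adj_def x y)
  have a2: "(z1 - y1, z2 - y2) \<in> {(1, 0), (-1, 0), (0, 1), (0, -1), (1, 1), (-1, -1)}"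
    using assms(2) by (simp add: T_adj_def y z)
  from T_arith[OF h a1 a2] have "x1 = z1 \<and> x2 = z2" .
  then show ?thesis using x z by simp
qed

lemma T_adj_irrefl: "\<not> T_adj x x"
  by (simp add: T_adj_def)

lemma cwT_rotate: "cwT (rotate k Z) = cwT Z"
  by (simp add: cwT_def)

lemma lift_nullhom:
  "nullhom Y \<Longrightarrow> Y = map tp Z \<Longrightarrow> cwT Z \<Longrightarrow> nullhom Z"
proof (induction Y arbitrary: Z rule: nullhom.induct)
  case nh_nil then show ?case by (simp add: nullhom.nh_nil)
next
  case (nh_two a b)
  then obtain x y where "Z = [x, y]" by (cases Z; cases "tl Z"; auto)
  then show ?case by (simp add: nullhom.nh_two)
next
  case (nh_step a rest k b)
  define X where "X = a # b # a # rest"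
  define n where "n = length Z"
  have lZ: "length X = n" using arg_cong[OF nh_step.prems(1), of length] by (simp add: X_def n_def)
  have Xne: "X \<noteq> []" by (simp add: X_def)
  define Z0 where "Z0 = rotate (n - k mod n) Z"
  have "map tp Z0 = rotate (n - k mod n) (rotate k X)"
    using nh_step.prems(1) by (simp add: Z0_def X_def rotate_map)
  also have "\<dots> = X" using rotate_back[OF Xne, of k] lZ by simp
  finally have mZ0: "map tp Z0 = a # b # a # rest" by (simp add: X_def)
  then obtain x y z Zr where Z0eq: "Z0 = x # y # z # Zr" and
    txa: "tp x = a" and tyb: "tp y = b" and tza: "tp z = a" and tr: "map tp Zr = rest"
    by (auto simp: map_eq_Cons_conv)
  have cw0: "cwT Z0" using nh_step.prems(2) by (simp add: Z0_def cwT_rotate)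
  then have "T_adj x y" "T_adj y z" by (auto simp: cwT_def Z0eq dl_def)
  then have xz: "x = z" using T_key txa tza by metis
  show ?case
  proof (cases "Zr = []")
    case True
    then have "T_adj z x" using cw0 by (auto simp: cwT_def Z0eq dl_def)
    then show ?thesis using xz T_adj_irrefl by metis
  next
    case False
    have "cwT (x # Zr)" using cw0 xz False by (auto simp: cwT_def Z0eq dl_def)
    then have "nullhom (x # Zr)" using nh_step.IH tr txa by simp
    then have "nullhom (rotate 0 (x # y # x # Zr))" by (rule nullhom.nh_step)
    then have "nullhom Z0" using Z0eq xz by simp
    then show ?thesis unfolding Z0_def nullhom_rotate_iff .
  qed
qed


definition lp :: "'a list \<Rightarrow> ('a \<times> 'a) set" where
  "lp xs = set (zip xs (tl xs))"

lemma lp_simps[simp]: "lp [] = {}" "lp [a] = {}" "lp (a # b # r) = insert (a, b) (lp (b # r))"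
  by (simp_all add: lp_def)

lemma lp_snoc: "xs \<noteq> [] \<Longrightarrow> lp (xs @ [y]) = insert (last xs, y) (lp xs)"
proof (induction xs)
  case Nil then show ?case by simp
next
  case (Cons x xs)
  show ?case
  proof (cases xs)
    case Nil then show ?thesis by simp
  next
    case (Cons x' xs')
    then show ?thesis using Cons.IH by auto
  qed
qed

lemma zip_append_long: "length ys \<le> length xs \<Longrightarrow> zip (xs @ zs) ys = zip xs ys"
  by (simp add: zip_append1)

lemma set_dl_lp: "w \<noteq> [] \<Longrightarrow> set (dl w) = lp (w @ [hd w])"
proof -
  assume ne: "w \<noteq> []"
  have "zip (w @ [hd w]) (tl w @ [hd w]) = zip w (tl w @ [hd w])"
    using ne by (intro zip_append_long) simp
  then show ?thesis using ne by (simp add: dl_def lp_def rotate1_hd_tl)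
qed

lemma set_dl_Cons: "set (dl (d # D)) = insert (last (d # D), d) (lp (d # D))"
  using set_dl_lp[of "d # D"] lp_snoc[of "d # D" d] by simp

lemma in_set_zip_unique1:
  assumes "distinct xs" "(x, y1) \<in> set (zip xs ys)" "(x, y2) \<in> set (zip xs ys)"
  shows "y1 = y2"
proof -
  obtain i where i: "xs ! i = x" "ys ! i = y1" "i < length xs" "i < length ys"
    using assms(2) by (auto simp: in_set_zip)
  obtain j where j: "xs ! j = x" "ys ! j = y2" "j < length xs" "j < length ys"
    using assms(3) by (auto simp: in_set_zip)
  have "i = j" using i j assms(1) by (metis nth_eq_iff_index_eq)
  then show ?thesis using i j by simp
qed

lemma in_set_zip_unique2:
  assumes "distinct ys" "(x1, y) \<in> set (zip xs ys)" "(x2, y) \<in> set (zip xs ys)"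
  shows "x1 = x2"
proof -
  obtain i where i: "xs ! i = x1" "ys ! i = y" "i < length xs" "i < length ys"
    using assms(2) by (auto simp: in_set_zip)
  obtain j where j: "xs ! j = x2" "ys ! j = y" "j < length xs" "j < length ys"
    using assms(3) by (auto simp: in_set_zip)
  have "i = j" using i j assms(1) by (metis nth_eq_iff_index_eq)
  then show ?thesis using i j by simp
qed

lemma cdp_succ_unique:
  "distinct (dl w) \<Longrightarrow> (d, d1) \<in> set (dl (dl w)) \<Longrightarrow> (d, d2) \<in> set (dl (dl w)) \<Longrightarrow> d1 = d2"
  unfolding dl_def[of "dl w"] by (rule in_set_zip_unique1)

lemma cdp_pred_unique:
  "distinct (dl w) \<Longrightarrow> (d1, d) \<in> set (dl (dl w)) \<Longrightarrow> (d2, d) \<in> set (dl (dl w)) \<Longrightarrow> d1 = d2"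
  unfolding dl_def[of "dl w"] by (rule in_set_zip_unique2) simp_all

lemma cdp_darts: "(d1, d2) \<in> set (dl (dl w)) \<Longrightarrow> d1 \<in> set (dl w) \<and> d2 \<in> set (dl w)"
  unfolding dl_def[of "dl w"] by (metis set_rotate1 set_zip_leftD set_zip_rightD)

lemma mod_lt: "(i::nat) < n \<Longrightarrow> k mod n < n"
proof -
  assume "i < n"
  then have "0 < n" by simp
  then show ?thesis by simp
qed

lemma nth_dl: "i < length w \<Longrightarrow> dl w ! i = (w ! i, w ! (Suc i mod length w))"
  by (simp add: dl_def nth_rotate1)

lemma cdp_mid: "(d1, d2) \<in> set (dl (dl w)) \<Longrightarrow> snd d1 = fst d2"
proof -
  assume h: "(d1, d2) \<in> set (dl (dl w))"
  then obtain i where i: "dl w ! i = d1" "rotate1 (dl w) ! i = d2" "i < length w"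
    unfolding dl_def[of "dl w"] by (auto simp: in_set_zip)
  have "d2 = dl w ! (Suc i mod length w)" using i by (simp add: nth_rotate1)
  moreover have "Suc i mod length w < length w" using i(3) by (rule mod_lt)
  ultimately have "fst d2 = w ! (Suc i mod length w)" by (simp add: nth_dl)
  moreover have "d1 = (w ! i, w ! (Suc i mod length w))" using i(1,3) nth_dl[of i w] by simp
  ultimately show ?thesis by simp
qed

lemma cdp_rotate[simp]: "set (dl (dl (rotate k w))) = set (dl (dl w))"
  by (simp add: dl_rotate)

lemma out_dart: "x \<in> set w \<Longrightarrow> \<exists>y. (x, y) \<in> set (dl w)"
proof -
  assume "x \<in> set w"
  then obtain i where i: "i < length w" "w ! i = x" by (auto simp: in_set_conv_nth)
  then have "dl w ! i \<in> set (dl w)" by simp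
  then show ?thesis using i by (auto simp: nth_dl)
qed

lemma dl_fst_in: "(x, y) \<in> set (dl w) \<Longrightarrow> x \<in> set w \<and> y \<in> set w"
  unfolding dl_def by (metis set_rotate1 set_zip_leftD set_zip_rightD)

lemma distinct_noloop: "distinct w \<Longrightarrow> 2 \<le> length w \<Longrightarrow> (x, y) \<in> set (dl w) \<Longrightarrow> x \<noteq> y"
proof -
  assume d: "distinct w" and l: "2 \<le> length w" and xy: "(x, y) \<in> set (dl w)"
  then obtain i where i: "i < length w" "dl w ! i = (x, y)" by (auto simp: in_set_conv_nth)
  have ne: "i \<noteq> Suc i mod length w"
  proof (cases "Suc i < length w")
    case True then show ?thesis by simp
  next
    case False then have "Suc i = length w" using i by simp
    then show ?thesis using l by simp
  qed
  have lt: "Suc i mod length w < length w" using i(1) by (rule mod_lt)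
  have "w ! i \<noteq> w ! (Suc i mod length w)"
    using nth_eq_iff_index_eq[OF d i(1) lt] ne by simp
  then show ?thesis using i by (simp add: nth_dl)
qed

lemma distinct_cdp:
  assumes d: "distinct w" and xv: "(x, v) \<in> set (dl w)" and vz: "(v, z) \<in> set (dl w)"
  shows "((x, v), (v, z)) \<in> set (dl (dl w))"
proof -
  define n where "n = length w"
  obtain i where i: "i < n" "dl w ! i = (x, v)" using xv by (auto simp: in_set_conv_nth n_def)
  obtain j where j: "j < n" "dl w ! j = (v, z)" using vz by (auto simp: in_set_conv_nth n_def)
  have wi: "w ! (Suc i mod n) = v" using i by (simp add: nth_dl n_def)
  have wj: "w ! j = v" using j by (simp add: nth_dl n_def)
  have si: "Suc i mod n < n" using i by simp
  have "j = Suc i mod n" using wi wj si j(1) nth_eq_iff_index_eq[OF d, of j "Suc i mod n"]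
    by (simp add: n_def)
  then have "rotate1 (dl w) ! i = (v, z)" using i j by (simp add: nth_rotate1 n_def)
  moreover have "(dl w ! i, rotate1 (dl w) ! i) \<in> set (dl (dl w))"
    using i unfolding dl_def[of "dl w"] by (auto simp: in_set_zip n_def)
  ultimately show ?thesis using i by simp
qed


lemma reroute:
  assumes p_in: "\<And>p. r p w \<Longrightarrow> p = p0"
    and s_out: "\<And>q. r w q \<Longrightarrow> q = s0"
    and ps: "r'\<^sup>*\<^sup>* p0 s0"
    and keep: "\<And>p q. r p q \<Longrightarrow> p \<noteq> w \<Longrightarrow> q \<noteq> w \<Longrightarrow> r' p q"
    and path: "r\<^sup>*\<^sup>* x y" and xw: "x \<noteq> w"
  shows "(y \<noteq> w \<longrightarrow> r'\<^sup>*\<^sup>* x y) \<and> (y = w \<longrightarrow> r'\<^sup>*\<^sup>* x p0)"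
  using path
proof (induction rule: rtranclp_induct)
  case base then show ?case using xw by simp
next
  case (step y z)
  show ?case
  proof (cases "z = w")
    case True
    then have "y = p0" using p_in step.hyps(2) by simp
    then show ?thesis using step.IH True by (cases "y = w") auto
  next
    case False
    show ?thesis
    proof (cases "y = w")
      case True
      then have "z = s0" using s_out step.hyps(2) by simp
      then show ?thesis using step.IH True False ps by (auto intro: rtranclp_trans)
    next
      case yF: False
      then have "r' y z" using keep step.hyps(2) False by simp
      then show ?thesis using step.IH yF False by (auto intro: rtranclp.rtrancl_into_rtrancl)
    qed
  qed
qed

lemma reroute2:
  assumes "\<And>p. r p w \<Longrightarrow> p = p0" "\<And>q. r w q \<Longrightarrow> q = s0" "r'\<^sup>*\<^sup>* p0 s0"
    "\<And>p q. r p q \<Longrightarrow> p \<noteq> w \<Longrightarrow> q \<noteq> w \<Longrightarrow> r' p q"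
    "r\<^sup>*\<^sup>* x y" "x \<noteq> w" "y \<noteq> w"
  shows "r'\<^sup>*\<^sup>* x y"
  using reroute[of r w p0 s0 r' x y] assms by blast

lemma path_replace:
  assumes "\<And>a b. r a b \<Longrightarrow> r'\<^sup>*\<^sup>* a b" "r\<^sup>*\<^sup>* x y"
  shows "r'\<^sup>*\<^sup>* x y"
  using assms(2)
proof (induction rule: rtranclp_induct)
  case base then show ?case by simp
next
  case (step y z) then show ?case using assms(1) by (meson rtranclp_trans)
qed

definition rotr :: "'v list \<Rightarrow> 'v list set \<Rightarrow> 'v \<Rightarrow> 'v \<Rightarrow> 'v \<Rightarrow> bool" where
  "rotr W F y x z \<longleftrightarrow> (\<exists>w\<in>insert W F. ((x, y), (y, z)) \<in> set (dl (dl w)))"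

definition Inv :: "'v list \<Rightarrow> 'v list set \<Rightarrow> bool" where
  "Inv W F \<longleftrightarrow> finite F \<and> 2 \<le> length W \<and> distinct (dl W) \<and> (\<forall>d\<in>set (dl W). fst d \<noteq> snd d) \<and>
     (\<forall>f\<in>F. distinct f \<and> length f = 4) \<and>
     (\<forall>f\<in>F. set (dl f) \<inter> set (dl W) = {}) \<and>
     (\<forall>f\<in>F. \<forall>g\<in>F. f \<noteq> g \<longrightarrow> set (dl f) \<inter> set (dl g) = {}) \<and>
     (\<forall>u v. (u, v) \<in> map_darts W F \<longrightarrow> (v, u) \<in> map_darts W F) \<and>
     (\<forall>v\<in>map_verts W F. \<forall>x z. H_adj W F v x \<and> H_adj W F v z \<longrightarrow> (rotr W F v)\<^sup>*\<^sup>* x z) \<and>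
     connected_on (map_verts W F) (H_adj W F) \<and>
     int (card (map_verts W F)) - int (card (map_darts W F) div 2) + int (card F + 1) = 2"

lemma map_darts_eq: "map_darts W F = set (dl W) \<union> (\<Union>f\<in>F. set (dl f))"
  by (simp add: map_darts_def darts_dl)

lemma map_verts_eq: "map_verts W F = set W \<union> (\<Union>f\<in>F. set f)"
  by (simp add: map_verts_def)

lemma map_darts_rotate[simp]: "map_darts (rotate k W) F = map_darts W F"
  by (simp add: map_darts_eq)

lemma map_verts_rotate[simp]: "map_verts (rotate k W) F = map_verts W F"
  by (simp add: map_verts_eq)

lemma H_adj_rotate[simp]: "H_adj (rotate k W) F = H_adj W F"
  by (simp add: H_adj_def[abs_def])

lemma rotr_rotate[simp]: "rotr (rotate k W) F = rotr W F"
  by (simp add: rotr_def[abs_def])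

lemma Inv_rotate: "Inv W F \<Longrightarrow> Inv (rotate k W) F"
  unfolding Inv_def by simp

lemma finite_map_darts: "finite F \<Longrightarrow> finite (map_darts W F)"
  by (simp add: map_darts_eq)

lemma finite_map_verts: "finite F \<Longrightarrow> finite (map_verts W F)"
  by (simp add: map_verts_eq)


section \<open>No inner faces: a backtrack exists\<close>

lemma final_bt:
  assumes inv: "Inv W {}" and l3: "3 \<le> length W"
  shows "\<exists>i<length W. W ! i = W ! (Suc (Suc i) mod length W)"
proof (rule ccontr)
  assume nb: "\<not> (\<exists>i<length W. W ! i = W ! (Suc (Suc i) mod length W))"
  define n where "n = length W"
  define D where "D = set (dl W)"
  define V where "V = set W"
  define N where "N p = {z. (p, z) \<in> D}" for p
  have dist: "distinct (dl W)" using inv by (simp add: Inv_def)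
  have cD: "card D = n" using dist by (simp add: D_def n_def distinct_card)
  have mdD: "map_darts W {} = D" by (simp add: map_darts_eq D_def)
  have mvV: "map_verts W {} = V" by (simp add: map_verts_eq V_def)
  have eul: "int (card V) - int (n div 2) + 1 = 2"
    using inv cD unfolding Inv_def mdD mvV by simp
  have sym: "\<And>x y. (x, y) \<in> D \<Longrightarrow> (y, x) \<in> D"
    using inv unfolding Inv_def mdD by blast
  have finV: "finite V" by (simp add: V_def)
  have finN: "\<forall>p\<in>V. finite (N p)"
  proof
    fix p
    have "N p \<subseteq> snd ` D" by (force simp: N_def)
    then show "finite (N p)" by (rule finite_subset) (simp add: D_def)
  qed
  have DS: "D = Sigma V N"
    by (auto simp: N_def V_def D_def dest: dl_fst_in)
  have sumN: "n = (\<Sum>p\<in>V. card (N p))"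
    using cD DS card_SigmaI[OF finV finN] by simp
  have deg2: "\<forall>p\<in>V. 2 \<le> card (N p)"
  proof
    fix p assume pV: "p \<in> V"
    obtain y where "(p, y) \<in> D" using out_dart[of p W] pV by (auto simp: V_def D_def)
    then have Nne: "N p \<noteq> {}" by (auto simp: N_def)
    show "2 \<le> card (N p)"
    proof (rule ccontr)
      assume "\<not> 2 \<le> card (N p)"
      then have "card (N p) \<le> Suc 0" by simp
      then have one: "\<forall>a1\<in>N p. \<forall>a2\<in>N p. a1 = a2"
        using card_le_Suc0_iff_eq finN pV by blast
      obtain x where xN: "x \<in> N p" using Nne by blast
      then have "(x, p) \<in> D" using sym by (simp add: N_def)
      then obtain i where i: "i < n" "dl W ! i = (x, p)"
        by (auto simp: D_def in_set_conv_nth n_def)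
      have wi: "W ! i = x" "W ! (Suc i mod n) = p" using i nth_dl[of i W] by (simp_all add: n_def)
      have si: "Suc i mod n < n" using i(1) by (rule mod_lt)
      have "dl W ! (Suc i mod n) \<in> D" using si by (simp add: D_def n_def)
      then have "(p, W ! (Suc (Suc i mod n) mod n)) \<in> D" using si wi nth_dl[of "Suc i mod n" W]
        by (simp add: n_def)
      then have "W ! (Suc (Suc i) mod n) \<in> N p" by (simp add: N_def mod_Suc_eq)
      then have "W ! (Suc (Suc i) mod n) = x" using one xN by blast
      then show False using nb i(1) wi(1) by (auto simp: n_def)
    qed
  qed
  have "(\<Sum>p\<in>V. 2) \<le> (\<Sum>p\<in>V. card (N p))"
    using deg2 by (intro sum_mono) simp
  then have "2 * card V \<le> n" using sumN by simp
  then show False using eul by linarith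
qed

lemma exists_merge:
  assumes inv: "Inv W F" and Fne: "F \<noteq> {}"
  shows "\<exists>x y. (x, y) \<in> set (dl W) \<and> (y, x) \<notin> set (dl W)"
proof (rule ccontr)
  assume "\<not> ?thesis"
  then have allrev: "\<And>x y. (x, y) \<in> set (dl W) \<Longrightarrow> (y, x) \<in> set (dl W)" by blast
  define D where "D = map_darts W F"
  define V where "V = map_verts W F"
  define A where "A p \<longleftrightarrow> (\<forall>z. (p, z) \<in> D \<longrightarrow> (p, z) \<in> set (dl W))" for p
  define hasW where "hasW p \<longleftrightarrow> (\<exists>z. (p, z) \<in> set (dl W))" for p
  have disj: "\<forall>f\<in>F. set (dl f) \<inter> set (dl W) = {}" using inv by (simp add: Inv_def)
  have fl: "\<forall>f\<in>F. distinct f \<and> length f = 4" using inv by (simp add: Inv_def)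
  have conn: "connected_on V (H_adj W F)" using inv by (simp add: Inv_def V_def)
  have rot: "\<forall>v\<in>V. \<forall>x z. H_adj W F v x \<and> H_adj W F v z \<longrightarrow> (rotr W F v)\<^sup>*\<^sup>* x z"
    using inv by (simp add: Inv_def V_def)
  obtain f where fF: "f \<in> F" using Fne by blast
  have "f \<noteq> []" using fl fF by auto
  then obtain x y where xy: "(x, y) \<in> set (dl f)" using out_dart[of "hd f" f] by auto
  have xyD: "(x, y) \<in> D" using xy fF by (auto simp: D_def map_darts_eq)
  have xyW: "(x, y) \<notin> set (dl W)" using xy fF disj by blast
  have xV: "x \<in> V" using xy fF dl_fst_in[OF xy] by (auto simp: V_def map_verts_eq)
  have nAx: "\<not> A x" using xyD xyW by (auto simp: A_def)
  have Wne: "W \<noteq> []" using inv by (auto simp: Inv_def)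
  have w0V: "hd W \<in> V" using Wne by (simp add: V_def map_verts_eq)
  have hw0: "hasW (hd W)" using out_dart[of "hd W" W] Wne by (simp add: hasW_def)
  have "(\<lambda>a b. a \<in> V \<and> b \<in> V \<and> H_adj W F a b)\<^sup>*\<^sup>* (hd W) x"
    using conn w0V xV by (simp add: connected_on_def)
  then have "(\<exists>p. hasW p \<and> \<not> A p) \<or> (hasW x \<and> A x)"
  proof (induction rule: rtranclp_induct)
    case base then show ?case using hw0 by blast
  next
    case (step q q')
    show ?case
    proof (cases "\<exists>p. hasW p \<and> \<not> A p")
      case True then show ?thesis by blast
    next
      case False
      then have hq: "hasW q \<and> A q" using step.IH by blast
      have "(q, q') \<in> D" using step.hyps(2) by (simp add: H_adj_def D_def)
      then have "(q, q') \<in> set (dl W)" using hq by (simp add: A_def)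
      then have "hasW q'" using allrev by (auto simp: hasW_def)
      then show ?thesis by blast
    qed
  qed
  then obtain p where hp: "hasW p" and nAp: "\<not> A p" using nAx by blast
  obtain z1 where z1: "(p, z1) \<in> set (dl W)" using hp by (auto simp: hasW_def)
  obtain z2 where z2: "(p, z2) \<in> D" "(p, z2) \<notin> set (dl W)" using nAp by (auto simp: A_def)
  have pV: "p \<in> V" using z1 dl_fst_in[OF z1] by (simp add: V_def map_verts_eq)
  have "H_adj W F p z1" using z1 by (simp add: H_adj_def map_darts_eq)
  moreover have "H_adj W F p z2" using z2 by (simp add: H_adj_def D_def)
  ultimately have path: "(rotr W F p)\<^sup>*\<^sup>* z1 z2" using rot pV by blast
  have "(p, z2) \<in> set (dl W)" using path
  proof (induction rule: rtranclp_induct)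
    case base then show ?case by (rule z1)
  next
    case (step q q')
    obtain w where w: "w \<in> insert W F" "((q, p), (p, q')) \<in> set (dl (dl w))"
      using step.hyps(2) by (auto simp: rotr_def)
    have qp: "(q, p) \<in> set (dl W)" using allrev step.IH by blast
    have "(q, p) \<in> set (dl w)" using cdp_darts[OF w(2)] by simp
    then have "w = W" using w(1) qp disj by blast
    then show ?case using cdp_darts[OF w(2)] by simp
  qed
  then show False using z2 by simp
qed


section \<open>Removing a backtrack\<close>

lemma Inv_parts:
  assumes "Inv W F"
  shows "finite F" "2 \<le> length W" "distinct (dl W)" "\<forall>d\<in>set (dl W). fst d \<noteq> snd d"
    "\<forall>f\<in>F. distinct f \<and> length f = 4" "\<forall>f\<in>F. set (dl f) \<inter> set (dl W) = {}"
    "\<forall>f\<in>F. \<forall>g\<in>F. f \<noteq> g \<longrightarrow> set (dl f) \<inter> set (dl g) = {}"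
    "\<forall>u v. (u, v) \<in> map_darts W F \<longrightarrow> (v, u) \<in> map_darts W F"
    "\<forall>v\<in>map_verts W F. \<forall>x z. H_adj W F v x \<and> H_adj W F v z \<longrightarrow> (rotr W F v)\<^sup>*\<^sup>* x z"
    "connected_on (map_verts W F) (H_adj W F)"
    "int (card (map_verts W F)) - int (card (map_darts W F) div 2) + int (card F + 1) = 2"
  using assms unfolding Inv_def by blast+

lemma back_step:
  assumes inv: "Inv (u # v # u # R) F"
  shows "Inv (u # R) F \<and> card (map_darts (u # R) F) < card (map_darts (u # v # u # R) F)"
proof -
  define W where "W = u # v # u # R"
  define W' where "W' = u # R"
  define Oth where "Oth = (\<Union>f\<in>F. set (dl f))"
  define D where "D = map_darts W F"
  define D' where "D' = map_darts W' F"
  define V where "V = map_verts W F"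
  define V' where "V' = map_verts W' F"
  note P = Inv_parts[OF inv, folded W_def]
  have dlW: "dl W = (u, v) # (v, u) # dl W'" by (simp add: W_def W'_def dl_def)
  have noloop: "\<forall>d\<in>set (dl W). fst d \<noteq> snd d" using P(4) .
  have Rne: "R \<noteq> []"
  proof
    assume "R = []"
    then have "(u, u) \<in> set (dl W)" by (simp add: W_def dl_def)
    then show False using noloop by auto
  qed
  have uv: "u \<noteq> v" using noloop dlW by auto
  have distW': "distinct (dl W')" and uvW': "(u, v) \<notin> set (dl W')" and vuW': "(v, u) \<notin> set (dl W')"
    using P(3) dlW by auto
  have uvO: "(u, v) \<notin> Oth" "(v, u) \<notin> Oth" using P(6) dlW by (auto simp: Oth_def)
  have Deq: "D = insert (u, v) (insert (v, u) D')"
    by (simp add: D_def D'_def map_darts_eq dlW)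
  have D'eq: "D' = set (dl W') \<union> Oth" by (simp add: D'_def map_darts_eq Oth_def)
  have uvD': "(u, v) \<notin> D'" "(v, u) \<notin> D'" using uvW' vuW' uvO D'eq by auto
  have finD': "finite D'" using P(1) by (simp add: D'_def finite_map_darts)
  have cardD: "card D = card D' + 2" using Deq uvD' finD' uv by simp
  have D'sub: "D' = D - {(u, v), (v, u)}" using Deq uvD' by auto
  have symD: "\<And>a b. (a, b) \<in> D \<Longrightarrow> (b, a) \<in> D" using P(8) by (simp add: D_def)
  have W'ne: "dl W' \<noteq> []" using Rne by (simp add: W'_def dl_def)
  define h2 where "h2 = hd (dl W')"
  define e2 where "e2 = last (dl W')"
  obtain T where T: "dl W' = h2 # T" using W'ne by (cases "dl W'") (auto simp: h2_def)
  have cdpW: "set (dl (dl W)) = insert (e2, (u, v)) (insert ((u, v), (v, u)) (insert ((v, u), h2) (lp (dl W'))))"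
    unfolding dlW set_dl_Cons using W'ne by (simp add: T e2_def)
  have cdpW': "set (dl (dl W')) = insert (e2, h2) (lp (dl W'))"
    unfolding T set_dl_Cons by (simp add: e2_def T)
  have "h2 = dl W' ! 0" using W'ne by (simp add: h2_def hd_conv_nth)
  moreover have "dl W' ! 0 = (W' ! 0, W' ! (Suc 0 mod length W'))" by (rule nth_dl) (simp add: W'_def)
  ultimately have fh2: "fst h2 = u" by (simp add: W'_def)
  have se2: "snd e2 = u" using cdp_mid[of e2 h2 W'] cdpW' fh2 by simp
  have lpsub: "lp (dl W') \<subseteq> set (dl (dl W'))" using cdpW' by auto
  have vV: "v \<in> V" by (simp add: V_def map_verts_eq W_def)
  have vuD: "(v, u) \<in> D" by (simp add: Deq)
  have uvW: "(u, v) \<in> set (dl W)" "(v, u) \<in> set (dl W)" by (simp_all add: dlW)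
  have onlyW: "\<And>w d. w \<in> insert W F \<Longrightarrow> d \<in> set (dl w) \<Longrightarrow> d \<in> set (dl W) \<Longrightarrow> w = W"
    using P(6) by blast
  have nv: "\<And>z. (v, z) \<in> D \<Longrightarrow> z = u"
  proof -
    fix z assume vz: "(v, z) \<in> D"
    have "(rotr W F v)\<^sup>*\<^sup>* u z"
      using P(9) vV vuD vz by (simp add: H_adj_def D_def V_def)
    then show "z = u"
    proof (induction rule: rtranclp_induct)
      case base then show ?case by simp
    next
      case (step y q)
      then obtain w where w: "w \<in> insert W F" "((u, v), (v, q)) \<in> set (dl (dl w))"
        by (auto simp: rotr_def)
      have "w = W" using onlyW[OF w(1) _ uvW(1)] cdp_darts[OF w(2)] by simp
      moreover have "((u, v), (v, u)) \<in> set (dl (dl W))" using cdpW by simp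
      ultimately show ?case using cdp_succ_unique[OF P(3)] w(2) by fastforce
    qed
  qed
  have nv2: "\<And>z. (z, v) \<in> D \<Longrightarrow> z = u"
  proof -
    fix z assume "(z, v) \<in> D"
    then have "(v, z) \<in> D" by (rule symD)
    then show "z = u" by (rule nv)
  qed
  have vW': "v \<notin> set W'"
  proof
    assume "v \<in> set W'"
    then obtain y where "(v, y) \<in> set (dl W')" using out_dart[of v W'] by blast
    moreover then have "(v, y) \<in> D" by (simp add: Deq D'eq)
    then have "y = u" by (rule nv)
    ultimately show False using vuW' by simp
  qed
  have vF: "\<forall>f\<in>F. v \<notin> set f"
  proof (intro ballI notI)
    fix f assume fF: "f \<in> F" and "v \<in> set f"
    then obtain y where vy: "(v, y) \<in> set (dl f)" using out_dart[of v f] by blast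
    then have "(v, y) \<in> D" using fF by (auto simp: D_def map_darts_eq)
    then have "y = u" by (rule nv)
    have "set (dl f) \<inter> set (dl W) = {}" using P(6) fF by simp
    then show False using vy uvW(2) \<open>y = u\<close> by blast
  qed
  have Veq: "V = insert v V'"
    by (auto simp: V_def V'_def map_verts_eq W_def W'_def)
  have vV': "v \<notin> V'" using vW' vF by (auto simp: V'_def map_verts_eq)
  have finV': "finite V'" using P(1) by (simp add: V'_def finite_map_verts)
  have cardV: "card V = card V' + 1" using Veq vV' finV' by simp
  have V'sub: "V' = V - {v}" using Veq vV' by auto
  have eul: "int (card V') - int (card D' div 2) + int (card F + 1) = 2"
  proof -
    have "int (card V) - int (card D div 2) + int (card F + 1) = 2" using P(11) by (simp add: V_def D_def)
    moreover have "card D div 2 = card D' div 2 + 1" using cardD by simp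
    ultimately show ?thesis using cardV by simp
  qed
  have symD': "\<forall>a b. (a, b) \<in> D' \<longrightarrow> (b, a) \<in> D'"
    using symD D'sub by auto
  have conn: "connected_on V' (H_adj W' F)"
    unfolding connected_on_def
  proof (intro ballI)
    fix x z assume xV': "x \<in> V'" and zV': "z \<in> V'"
    have old: "(\<lambda>a b. a \<in> V \<and> b \<in> V \<and> H_adj W F a b)\<^sup>*\<^sup>* x z"
      using P(10) xV' zV' V'sub by (simp add: connected_on_def V_def)
    show "(\<lambda>a b. a \<in> V' \<and> b \<in> V' \<and> H_adj W' F a b)\<^sup>*\<^sup>* x z"
    proof (rule reroute2[OF _ _ _ _ old, of v u u])
      fix p assume "p \<in> V \<and> v \<in> V \<and> H_adj W F p v"
      then show "p = u" using nv2 by (simp add: H_adj_def D_def)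
    next
      fix q assume "v \<in> V \<and> q \<in> V \<and> H_adj W F v q"
      then show "q = u" using nv by (simp add: H_adj_def D_def)
    next
      fix p q assume "p \<in> V \<and> q \<in> V \<and> H_adj W F p q" "p \<noteq> v" "q \<noteq> v"
      then show "p \<in> V' \<and> q \<in> V' \<and> H_adj W' F p q"
        using V'sub D'sub by (auto simp: H_adj_def D_def D'_def)
    qed (use xV' zV' V'sub in auto)
  qed
  have rot: "\<forall>y\<in>V'. \<forall>x z. H_adj W' F y x \<and> H_adj W' F y z \<longrightarrow> (rotr W' F y)\<^sup>*\<^sup>* x z"
  proof (intro ballI allI impI)
    fix y x z assume yV': "y \<in> V'" and adj: "H_adj W' F y x \<and> H_adj W' F y z"
    have yx: "(y, x) \<in> D" "(y, x) \<notin> {(u, v), (v, u)}" "(y, z) \<in> D" "(y, z) \<notin> {(u, v), (v, u)}"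
      using adj D'sub by (auto simp: H_adj_def D'_def)
    have yV: "y \<in> V" using yV' V'sub by simp
    have old: "(rotr W F y)\<^sup>*\<^sup>* x z" using P(9) yV yx by (simp add: H_adj_def D_def V_def)
    show "(rotr W' F y)\<^sup>*\<^sup>* x z"
    proof (cases "y = u")
      case True
      have xv: "x \<noteq> v" "z \<noteq> v" using yx True by auto
      show ?thesis unfolding True
      proof (rule reroute2[of "rotr W F u" v "fst e2" "snd h2"])
        fix p assume "rotr W F u p v"
        then obtain w where w: "w \<in> insert W F" "((p, u), (u, v)) \<in> set (dl (dl w))"
          by (auto simp: rotr_def)
        have "w = W" using onlyW[OF w(1) _ uvW(1)] cdp_darts[OF w(2)] by simp
        moreover have "(e2, (u, v)) \<in> set (dl (dl W))" using cdpW by simp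
        ultimately have "(p, u) = e2" using cdp_pred_unique[OF P(3)] w(2) by blast
        then show "p = fst e2" by auto
      next
        fix q assume "rotr W F u v q"
        then obtain w where w: "w \<in> insert W F" "((v, u), (u, q)) \<in> set (dl (dl w))"
          by (auto simp: rotr_def)
        have "w = W" using onlyW[OF w(1) _ uvW(2)] cdp_darts[OF w(2)] by simp
        moreover have "((v, u), h2) \<in> set (dl (dl W))" using cdpW by simp
        ultimately have "(u, q) = h2" using cdp_succ_unique[OF P(3)] w(2) by blast
        then show "q = snd h2" by auto
      next
        have "((fst e2, u), (u, snd h2)) = (e2, h2)" using se2 fh2 by (cases e2, cases h2) auto
        then have "rotr W' F u (fst e2) (snd h2)" using cdpW' by (auto simp: rotr_def)
        then show "(rotr W' F u)\<^sup>*\<^sup>* (fst e2) (snd h2)" by simp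
      next
        fix p q assume r: "rotr W F u p q" "p \<noteq> v" "q \<noteq> v"
        then obtain w where w: "w \<in> insert W F" "((p, u), (u, q)) \<in> set (dl (dl w))"
          by (auto simp: rotr_def)
        show "rotr W' F u p q"
        proof (cases "w = W")
          case True
          then have "((p, u), (u, q)) \<in> lp (dl W')" using w(2) cdpW r uv by auto
          then show ?thesis using lpsub by (auto simp: rotr_def)
        next
          case False then show ?thesis using w by (auto simp: rotr_def)
        qed
      qed (use old True xv in auto)
    next
      case False
      have yv: "y \<noteq> v" using yV' V'sub by auto
      have "rotr W F y \<le> rotr W' F y"
      proof (intro predicate2I)
        fix p q assume "rotr W F y p q"
        then obtain w where w: "w \<in> insert W F" "((p, y), (y, q)) \<in> set (dl (dl w))"
          by (auto simp: rotr_def)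
        show "rotr W' F y p q"
        proof (cases "w = W")
          case True
          then have "((p, y), (y, q)) \<in> lp (dl W')" using w(2) cdpW False yv se2 by auto
          then show ?thesis using lpsub by (auto simp: rotr_def)
        next
          case F: False then show ?thesis using w by (auto simp: rotr_def)
        qed
      qed
      then show ?thesis using old by (rule rtranclp_mono[THEN predicate2D])
    qed
  qed
  have "Inv W' F"
    unfolding Inv_def
  proof (intro conjI)
    show "finite F" by (rule P(1))
    show "2 \<le> length W'" using Rne by (cases R) (auto simp: W'_def)
    show "distinct (dl W')" by (rule distW')
    show "\<forall>d\<in>set (dl W'). fst d \<noteq> snd d" using noloop dlW by auto
    show "\<forall>f\<in>F. distinct f \<and> length f = 4" by (rule P(5))
    show "\<forall>f\<in>F. set (dl f) \<inter> set (dl W') = {}" using P(6) dlW by auto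
    show "\<forall>f\<in>F. \<forall>g\<in>F. f \<noteq> g \<longrightarrow> set (dl f) \<inter> set (dl g) = {}" by (rule P(7))
    show "\<forall>a b. (a, b) \<in> map_darts W' F \<longrightarrow> (b, a) \<in> map_darts W' F" using symD' by (simp add: D'_def)
    show "\<forall>y\<in>map_verts W' F. \<forall>x z. H_adj W' F y x \<and> H_adj W' F y z \<longrightarrow> (rotr W' F y)\<^sup>*\<^sup>* x z"
      using rot by (simp add: V'_def)
    show "connected_on (map_verts W' F) (H_adj W' F)" using conn by (simp add: V'_def)
    show "int (card (map_verts W' F)) - int (card (map_darts W' F) div 2) + int (card F + 1) = 2"
      using eul by (simp add: V'_def D'_def)
  qed
  moreover have "card D' < card D" using cardD by simp
  ultimately show ?thesis by (simp add: W_def W'_def D_def D'_def)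
qed


section \<open>Merging an inner face into the outer walk\<close>

lemma merge_step:
  assumes inv: "Inv (u # v # R) F" and fF: "f \<in> F" and fr: "rotate j f = [v, u, a, b]"
  shows "Inv (u # a # b # v # R) (F - {f}) \<and>
    card (map_darts (u # a # b # v # R) (F - {f})) < card (map_darts (u # v # R) F)"
proof -
  define W where "W = u # v # R"
  define W' where "W' = u # a # b # v # R"
  define F' where "F' = F - {f}"
  define Oth where "Oth = (\<Union>g\<in>F'. set (dl g))"
  define D where "D = map_darts W F"
  define D' where "D' = map_darts W' F'"
  define V where "V = map_verts W F"
  define V' where "V' = map_verts W' F'"
  define D1 where "D1 = zip (v # R) (R @ [u])"
  note P = Inv_parts[OF inv, folded W_def]
  have fd: "distinct f" "length f = 4" using P(5) fF by auto
  have "distinct [v, u, a, b]" using fd(1) fr by (metis distinct_rotate)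
  then have ne: "u \<noteq> v" "u \<noteq> a" "u \<noteq> b" "v \<noteq> a" "v \<noteq> b" "a \<noteq> b" by auto
  have dlf: "set (dl f) = {(v, u), (u, a), (a, b), (b, v)}"
  proof -
    have "set (dl f) = set (dl (rotate j f))" by simp
    also have "\<dots> = {(v, u), (u, a), (a, b), (b, v)}" unfolding fr by (auto simp: dl_def)
    finally show ?thesis .
  qed
  have cdpf: "set (dl (dl f)) = {((v, u), (u, a)), ((u, a), (a, b)), ((a, b), (b, v)), ((b, v), (v, u))}"
  proof -
    have "set (dl (dl f)) = set (dl (dl (rotate j f)))" by simp
    also have "\<dots> = {((v, u), (u, a)), ((u, a), (a, b)), ((a, b), (b, v)), ((b, v), (v, u))}"
      unfolding fr by (auto simp: dl_def)
    finally show ?thesis .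
  qed
  have distf: "distinct (dl f)" using fd(1) by (simp add: dl_def distinct_zipI1)
  have disjWf: "set (dl f) \<inter> set (dl W) = {}" using P(6) fF by simp
  have dlW: "dl W = (u, v) # D1" by (simp add: W_def D1_def dl_def)
  have dlW': "dl W' = (u, a) # (a, b) # (b, v) # D1" by (simp add: W'_def D1_def dl_def)
  have D1ne: "D1 \<noteq> []" by (simp add: D1_def)
  define h1 where "h1 = hd D1"
  define e1 where "e1 = last D1"
  obtain T1 where T1: "D1 = h1 # T1" using D1ne by (cases D1) (auto simp: h1_def)
  have cdpW: "set (dl (dl W)) = insert (e1, (u, v)) (insert ((u, v), h1) (lp D1))"
    unfolding dlW set_dl_Cons using D1ne by (simp add: T1 e1_def)
  have cdpW': "set (dl (dl W')) = insert (e1, (u, a)) (insert ((u, a), (a, b)) (insert ((a, b), (b, v))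
      (insert ((b, v), h1) (lp D1))))"
    unfolding dlW' set_dl_Cons using D1ne by (simp add: T1 e1_def)
  have fh1: "fst h1 = v" using cdp_mid[of "(u, v)" h1 W] cdpW by simp
  have se1: "snd e1 = u" using cdp_mid[of e1 "(u, v)" W] cdpW by simp
  have distD1: "distinct D1" and uvD1: "(u, v) \<notin> set D1" using P(3) dlW by auto
  have fD1: "set D1 \<inter> set (dl f) = {}" using disjWf dlW by auto
  have vuD1: "(v, u) \<notin> set D1" "(u, a) \<notin> set D1" "(a, b) \<notin> set D1" "(b, v) \<notin> set D1"
    using fD1 dlf by auto
  have distW': "distinct (dl W')" using distD1 vuD1 ne by (simp add: dlW')
  have Oth_disj: "\<And>g. g \<in> F' \<Longrightarrow> set (dl g) \<inter> set (dl f) = {} \<and> set (dl g) \<inter> set (dl W) = {}"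
  proof -
    fix g assume "g \<in> F'"
    then have gF: "g \<in> F" "g \<noteq> f" by (auto simp: F'_def)
    show "set (dl g) \<inter> set (dl f) = {} \<and> set (dl g) \<inter> set (dl W) = {}"
      using P(7) P(6) gF fF by simp
  qed
  have uvW: "(u, v) \<in> set (dl W)" by (simp add: dlW)
  have notO: "(u, v) \<notin> Oth" "(v, u) \<notin> Oth" "(u, a) \<notin> Oth" "(a, b) \<notin> Oth" "(b, v) \<notin> Oth"
    using Oth_disj dlf uvW by (fastforce simp: Oth_def)+
  have FF': "F = insert f F'" using fF by (auto simp: F'_def)
  have Deq': "D = insert (u, v) (set D1) \<union> set (dl f) \<union> Oth"
    by (simp add: D_def map_darts_eq dlW Oth_def FF' Un_assoc)
  have D'eq: "D' = {(u, a), (a, b), (b, v)} \<union> set D1 \<union> Oth"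
    by (simp add: D'_def map_darts_eq dlW' Oth_def)
  have uvD': "(u, v) \<notin> D'" "(v, u) \<notin> D'" using notO uvD1 vuD1 ne D'eq by auto
  have Deq: "D = insert (u, v) (insert (v, u) D')" using Deq' D'eq dlf by auto
  have finF: "finite F" by (rule P(1))
  have finD': "finite D'" using finF by (simp add: D'_def F'_def finite_map_darts)
  have cardD: "card D = card D' + 2" using Deq uvD' finD' ne by simp
  have D'sub: "D' = D - {(u, v), (v, u)}" using Deq uvD' by auto
  have symD: "\<And>x y. (x, y) \<in> D \<Longrightarrow> (y, x) \<in> D" using P(8) by (simp add: D_def)
  have setf: "set f = {v, u, a, b}" using fr by (metis list.set(1) list.set(2) set_rotate)
  have Veq: "V' = V"
    by (auto simp: V_def V'_def map_verts_eq W_def W'_def FF' setf)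
  have cF1: "card F' = card F - 1" using fF by (simp add: F'_def card_Diff_singleton)
  have cF0: "card F > 0" using finF fF card_gt_0_iff by blast
  have cardF: "card F = card F' + 1" using cF1 cF0 by simp
  have eul: "int (card V') - int (card D' div 2) + int (card F' + 1) = 2"
  proof -
    have "int (card V) - int (card D div 2) + int (card F + 1) = 2" using P(11) by (simp add: V_def D_def)
    moreover have "card D div 2 = card D' div 2 + 1" using cardD by simp
    ultimately show ?thesis using cardF Veq by simp
  qed
  have symD': "\<forall>x y. (x, y) \<in> D' \<longrightarrow> (y, x) \<in> D'" using symD D'sub by auto
  have abV: "u \<in> V" "v \<in> V" "a \<in> V" "b \<in> V" using Veq by (auto simp: V'_def map_verts_eq W'_def)
  have newD': "(u, a) \<in> D'" "(a, b) \<in> D'" "(b, v) \<in> D'" "(a, u) \<in> D'" "(b, a) \<in> D'" "(v, b) \<in> D'"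
    using D'eq symD' by auto
  define r' where "r' = (\<lambda>p q. p \<in> V' \<and> q \<in> V' \<and> H_adj W' F' p q)"
  have ra: "r' u a" "r' a b" "r' b v" "r' v b" "r' b a" "r' a u"
    using newD' abV Veq by (simp_all add: r'_def H_adj_def D'_def)
  have "r'\<^sup>*\<^sup>* u a" by (rule r_into_rtranclp[where r=r']) (rule ra(1))
  then have "r'\<^sup>*\<^sup>* u b" by (rule rtranclp.rtrancl_into_rtrancl) (rule ra(2))
  then have puv: "r'\<^sup>*\<^sup>* u v" by (rule rtranclp.rtrancl_into_rtrancl) (rule ra(3))
  have "r'\<^sup>*\<^sup>* v b" by (rule r_into_rtranclp[where r=r']) (rule ra(4))
  then have "r'\<^sup>*\<^sup>* v a" by (rule rtranclp.rtrancl_into_rtrancl) (rule ra(5))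
  then have pvu: "r'\<^sup>*\<^sup>* v u" by (rule rtranclp.rtrancl_into_rtrancl) (rule ra(6))
  have conn: "connected_on V' (H_adj W' F')"
    unfolding connected_on_def r'_def[symmetric]
  proof (intro ballI)
    fix x z assume xV': "x \<in> V'" and zV': "z \<in> V'"
    have old: "(\<lambda>p q. p \<in> V \<and> q \<in> V \<and> H_adj W F p q)\<^sup>*\<^sup>* x z"
      using P(10) xV' zV' Veq by (simp add: connected_on_def V_def)
    show "r'\<^sup>*\<^sup>* x z"
    proof (rule path_replace[OF _ old])
      fix p q assume pq: "p \<in> V \<and> q \<in> V \<and> H_adj W F p q"
      show "r'\<^sup>*\<^sup>* p q"
      proof (cases "(p, q) = (u, v) \<or> (p, q) = (v, u)")
        case True
        then show ?thesis
        proof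
          assume "(p, q) = (u, v)"
          then show ?thesis using puv by simp
        next
          assume "(p, q) = (v, u)"
          then show ?thesis using pvu by simp
        qed
      next
        case False
        then have "r' p q" using pq D'sub Veq by (auto simp: r'_def H_adj_def D_def D'_def)
        then show ?thesis by (rule r_into_rtranclp)
      qed
    qed
  qed
  have onlyW: "\<And>w. w \<in> insert W F \<Longrightarrow> (u, v) \<in> set (dl w) \<Longrightarrow> w = W"
  proof -
    fix w assume w: "w \<in> insert W F" "(u, v) \<in> set (dl w)"
    show "w = W"
    proof (rule ccontr)
      assume "w \<noteq> W"
      then have "w \<in> F" using w by simp
      then have "set (dl w) \<inter> set (dl W) = {}" using P(6) by simp
      then show False using w(2) uvW by blast
    qed
  qed
  have onlyf: "\<And>w. w \<in> insert W F \<Longrightarrow> (v, u) \<in> set (dl w) \<Longrightarrow> w = f"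
  proof -
    fix w assume w: "w \<in> insert W F" "(v, u) \<in> set (dl w)"
    have vuf: "(v, u) \<in> set (dl f)" using dlf by simp
    show "w = f"
    proof (rule ccontr)
      assume wf: "w \<noteq> f"
      show False
      proof (cases "w = W")
        case True then show False using w(2) vuf disjWf by blast
      next
        case False
        then have "w \<in> F'" using w(1) wf by (simp add: F'_def)
        then show False using Oth_disj[of w] w(2) vuf by blast
      qed
    qed
  qed
  have lpsub: "lp D1 \<subseteq> set (dl (dl W'))" using cdpW' by auto
  have rot: "\<forall>y\<in>V'. \<forall>x z. H_adj W' F' y x \<and> H_adj W' F' y z \<longrightarrow> (rotr W' F' y)\<^sup>*\<^sup>* x z"
  proof (intro ballI allI impI)
    fix y x z assume yV': "y \<in> V'" and adj: "H_adj W' F' y x \<and> H_adj W' F' y z"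
    have yx: "(y, x) \<in> D" "(y, x) \<notin> {(u, v), (v, u)}" "(y, z) \<in> D" "(y, z) \<notin> {(u, v), (v, u)}"
      using adj D'sub by (auto simp: H_adj_def D'_def)
    have yV: "y \<in> V" using yV' Veq by simp
    have old: "(rotr W F y)\<^sup>*\<^sup>* x z" using P(9) yV yx by (simp add: H_adj_def D_def V_def)
    have keepF': "\<And>w p q. w \<in> F' \<Longrightarrow> ((p, y), (y, q)) \<in> set (dl (dl w)) \<Longrightarrow> rotr W' F' y p q"
      by (auto simp: rotr_def)
    have casesw: "\<And>w. w \<in> insert W F \<Longrightarrow> w = W \<or> w = f \<or> w \<in> F'" by (auto simp: F'_def)
    show "(rotr W' F' y)\<^sup>*\<^sup>* x z"
    proof (cases "y = u")
      case True
      have xv: "x \<noteq> v" "z \<noteq> v" using yx True by auto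
      show ?thesis unfolding True
      proof (rule reroute2[of "rotr W F u" v "fst e1" a])
        fix p assume "rotr W F u p v"
        then obtain w where w: "w \<in> insert W F" "((p, u), (u, v)) \<in> set (dl (dl w))"
          by (auto simp: rotr_def)
        have "w = W" using onlyW[OF w(1)] cdp_darts[OF w(2)] by simp
        moreover have "(e1, (u, v)) \<in> set (dl (dl W))" using cdpW by simp
        ultimately have "(p, u) = e1" using cdp_pred_unique[OF P(3)] w(2) by blast
        then show "p = fst e1" by auto
      next
        fix q assume "rotr W F u v q"
        then obtain w where w: "w \<in> insert W F" "((v, u), (u, q)) \<in> set (dl (dl w))"
          by (auto simp: rotr_def)
        have "w = f" using onlyf[OF w(1)] cdp_darts[OF w(2)] by simp
        moreover have "((v, u), (u, a)) \<in> set (dl (dl f))" using cdpf by simp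
        ultimately have "(u, q) = (u, a)" using cdp_succ_unique[OF distf] w(2) by blast
        then show "q = a" by auto
      next
        have "((fst e1, u), (u, a)) = (e1, (u, a))" using se1 by (cases e1) auto
        then have "rotr W' F' u (fst e1) a" using cdpW' by (auto simp: rotr_def)
        then show "(rotr W' F' u)\<^sup>*\<^sup>* (fst e1) a" by simp
      next
        fix p q assume r: "rotr W F u p q" "p \<noteq> v" "q \<noteq> v"
        then obtain w where w: "w \<in> insert W F" "((p, u), (u, q)) \<in> set (dl (dl w))"
          by (auto simp: rotr_def)
        consider "w = W" | "w = f" | "w \<in> F'" using casesw[OF w(1)] by blast
        then show "rotr W' F' u p q"
        proof cases
          case 1
          then have "((p, u), (u, q)) \<in> lp D1" using w(2) cdpW r ne by auto
          then show ?thesis using lpsub by (auto simp: rotr_def)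
        next
          case 2
          then have False using w(2) cdpf r ne by auto
          then show ?thesis ..
        next
          case 3 then show ?thesis using w(2) by (auto simp: rotr_def)
        qed
      qed (use old True xv in auto)
    next
      case yu: False
      show ?thesis
      proof (cases "y = v")
        case True
        have xu: "x \<noteq> u" "z \<noteq> u" using yx True by auto
        show ?thesis unfolding True
        proof (rule reroute2[of "rotr W F v" u b "snd h1"])
          fix p assume "rotr W F v p u"
          then obtain w where w: "w \<in> insert W F" "((p, v), (v, u)) \<in> set (dl (dl w))"
            by (auto simp: rotr_def)
          have "w = f" using onlyf[OF w(1)] cdp_darts[OF w(2)] by simp
          moreover have "((b, v), (v, u)) \<in> set (dl (dl f))" using cdpf by simp
          ultimately have "(p, v) = (b, v)" using cdp_pred_unique[OF distf] w(2) by blast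
          then show "p = b" by auto
        next
          fix q assume "rotr W F v u q"
          then obtain w where w: "w \<in> insert W F" "((u, v), (v, q)) \<in> set (dl (dl w))"
            by (auto simp: rotr_def)
          have "w = W" using onlyW[OF w(1)] cdp_darts[OF w(2)] by simp
          moreover have "((u, v), h1) \<in> set (dl (dl W))" using cdpW by simp
          ultimately have "(v, q) = h1" using cdp_succ_unique[OF P(3)] w(2) by blast
          then show "q = snd h1" by auto
        next
          have "((b, v), (v, snd h1)) = ((b, v), h1)" using fh1 by (cases h1) auto
          then have "rotr W' F' v b (snd h1)" using cdpW' by (auto simp: rotr_def)
          then show "(rotr W' F' v)\<^sup>*\<^sup>* b (snd h1)" by simp
        next
          fix p q assume r: "rotr W F v p q" "p \<noteq> u" "q \<noteq> u"
          then obtain w where w: "w \<in> insert W F" "((p, v), (v, q)) \<in> set (dl (dl w))"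
            by (auto simp: rotr_def)
          consider "w = W" | "w = f" | "w \<in> F'" using casesw[OF w(1)] by blast
          then show "rotr W' F' v p q"
          proof cases
            case 1
            then have "((p, v), (v, q)) \<in> lp D1" using w(2) cdpW r ne by auto
            then show ?thesis using lpsub by (auto simp: rotr_def)
          next
            case 2
            then have False using w(2) cdpf r ne by auto
            then show ?thesis ..
          next
            case 3 then show ?thesis using w(2) by (auto simp: rotr_def)
          qed
        qed (use old True xu in auto)
      next
        case yv: False
        have "rotr W F y \<le> rotr W' F' y"
        proof (intro predicate2I)
          fix p q assume "rotr W F y p q"
          then obtain w where w: "w \<in> insert W F" "((p, y), (y, q)) \<in> set (dl (dl w))"
            by (auto simp: rotr_def)
          consider "w = W" | "w = f" | "w \<in> F'" using casesw[OF w(1)] by blast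
          then show "rotr W' F' y p q"
          proof cases
            case 1
            then have "((p, y), (y, q)) \<in> lp D1" using w(2) cdpW yu yv se1 by auto
            then show ?thesis using lpsub by (auto simp: rotr_def)
          next
            case 2
            then have "((p, y), (y, q)) \<in> set (dl (dl W'))" using w(2) cdpf cdpW' yu yv by auto
            then show ?thesis by (auto simp: rotr_def)
          next
            case 3 then show ?thesis using w(2) by (auto simp: rotr_def)
          qed
        qed
        then show ?thesis using old by (rule rtranclp_mono[THEN predicate2D])
      qed
    qed
  qed
  have "Inv W' F'"
    unfolding Inv_def
  proof (intro conjI)
    show "finite F'" using finF by (simp add: F'_def)
    show "2 \<le> length W'" by (simp add: W'_def)
    show "distinct (dl W')" by (rule distW')
    show "\<forall>d\<in>set (dl W'). fst d \<noteq> snd d" using P(4) dlW dlW' ne by auto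
    show "\<forall>g\<in>F'. distinct g \<and> length g = 4" using P(5) by (simp add: F'_def)
    show "\<forall>g\<in>F'. set (dl g) \<inter> set (dl W') = {}"
    proof
      fix g assume gF': "g \<in> F'"
      have "set (dl W') \<subseteq> set (dl W) \<union> set (dl f)" using dlW dlW' dlf by auto
      then show "set (dl g) \<inter> set (dl W') = {}" using Oth_disj[OF gF'] by blast
    qed
    show "\<forall>g\<in>F'. \<forall>g'\<in>F'. g \<noteq> g' \<longrightarrow> set (dl g) \<inter> set (dl g') = {}" using P(7) by (simp add: F'_def)
    show "\<forall>x y. (x, y) \<in> map_darts W' F' \<longrightarrow> (y, x) \<in> map_darts W' F'" using symD' by (simp add: D'_def)
    show "\<forall>y\<in>map_verts W' F'. \<forall>x z. H_adj W' F' y x \<and> H_adj W' F' y z \<longrightarrow> (rotr W' F' y)\<^sup>*\<^sup>* x z"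
      using rot by (simp add: V'_def)
    show "connected_on (map_verts W' F') (H_adj W' F')" using conn by (simp add: V'_def)
    show "int (card (map_verts W' F')) - int (card (map_darts W' F') div 2) + int (card F' + 1) = 2"
      using eul by (simp add: V'_def D'_def)
  qed
  moreover have "card D' < card D" using cardD by simp
  ultimately show ?thesis by (simp add: W_def W'_def D_def D'_def F'_def)
qed


definition Lf :: "('v \<Rightarrow> 'c) \<Rightarrow> 'v list \<Rightarrow> bool" where
  "Lf L f \<longleftrightarrow> L (f ! 0) = L (f ! 2) \<or> L (f ! 1) = L (f ! 3)"

lemma len4_ex: "length xs = 4 \<Longrightarrow> \<exists>a b c d. xs = [a, b, c, d]"
  by (simp add: numeral_eq_Suc length_Suc_conv) blast

lemma len4_eq: "length xs = 4 \<Longrightarrow> xs = [xs ! 0, xs ! 1, xs ! 2, xs ! 3]"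
  using len4_ex[of xs] by auto

lemma Lf_rotate:
  assumes l4: "length f = 4" and lf: "Lf L f"
  shows "Lf L (rotate j f)"
proof -
  obtain f0 f1 f2 f3 where f: "f = [f0, f1, f2, f3]" using len4_eq[OF l4] by blast
  have lf': "L f0 = L f2 \<or> L f1 = L f3" using lf f by (simp add: Lf_def)
  have r: "rotate j f = rotate (j mod 4) f" using l4 by (simp add: rotate_conv_mod[of j f])
  have "j mod 4 < 4" by simp
  then consider "j mod 4 = 0" | "j mod 4 = 1" | "j mod 4 = 2" | "j mod 4 = 3" by linarith
  then show ?thesis
  proof cases
    case 1
    then have "rotate j f = rotate 0 f" using r by (simp only:)
    then show ?thesis using lf by simp
  next
    case 2
    then have "rotate j f = rotate 1 [f0, f1, f2, f3]" using r f by (simp only:)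
    then have "rotate j f = [f1, f2, f3, f0]" by simp
    then show ?thesis using lf' by (auto simp: Lf_def)
  next
    case 3
    then have "rotate j f = rotate 2 [f0, f1, f2, f3]" using r f by (simp only:)
    then have "rotate j f = [f2, f3, f0, f1]" by (simp add: numeral_eq_Suc)
    then show ?thesis using lf' by (auto simp: Lf_def)
  next
    case 4
    then have "rotate j f = rotate 3 [f0, f1, f2, f3]" using r f by (simp only:)
    then have "rotate j f = [f3, f0, f1, f2]" by (simp add: numeral_eq_Suc)
    then show ?thesis using lf' by (auto simp: Lf_def)
  qed
qed

lemma main_lemma:
  fixes L :: "'v \<Rightarrow> 'c"
  assumes "Inv W F" "\<forall>f\<in>F. Lf L f"
  shows "nullhom (map L W)"
  using assms
proof (induction "card (map_darts W F)" arbitrary: W F rule: less_induct)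
  case less
  note inv = less.prems(1)
  define n where "n = length W"
  have n2: "2 \<le> n" using inv by (simp add: Inv_def n_def)
  show ?case
  proof (cases "n \<le> 2")
    case True
    then have "n = 2" using n2 by simp
    then obtain x y where "W = [x, y]" using len_le2_cases[of W] by (auto simp: n_def)
    then show ?thesis by (simp add: nullhom.nh_two)
  next
    case False
    then have n3: "3 \<le> n" by simp
    show ?thesis
    proof (cases "\<exists>i<n. W ! i = W ! (Suc (Suc i) mod n)")
      case True
      then obtain i where i: "i < n" "W ! i = W ! (Suc (Suc i) mod n)" by blast
      define X where "X = rotate i W"
      have lX: "3 \<le> length X" using n3 by (simp add: X_def n_def)
      then have "X = X ! 0 # X ! 1 # X ! 2 # drop 3 X" by (rule len_ge3_eq)
      then obtain a b c R where Xeq: "X = a # b # c # R" by blast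
      have "X ! 0 = W ! i" unfolding X_def by (subst nth_rotate) (use i n_def in auto)
      moreover have "X ! 2 = W ! (Suc (Suc i) mod n)" unfolding X_def
        by (subst nth_rotate) (use n3 n_def in auto)
      ultimately have ca: "c = a" using i(2) Xeq by simp
      have invX: "Inv (a # b # a # R) F" using Inv_rotate[OF inv, of i] Xeq ca by (simp add: X_def)
      note bs = back_step[OF invX]
      have mX: "map_darts (a # b # a # R) F = map_darts W F"
        using Xeq ca map_darts_rotate[of i W F] by (simp add: X_def)
      have "nullhom (map L (a # R))"
        using less.hyps[of "a # R" F] bs less.prems(2) mX by simp
      then have "nullhom (L a # map L R)" by simp
      then have "nullhom (rotate 0 (L a # L b # L a # map L R))" by (rule nullhom.nh_step)
      then have "nullhom (map L X)" using Xeq ca by simp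
      then have "nullhom (rotate i (map L W))" by (simp add: X_def rotate_map)
      then show ?thesis by (simp add: nullhom_rotate_iff)
    next
      case nbt: False
      have Fne: "F \<noteq> {}"
      proof
        assume "F = {}"
        then show False using final_bt[of W] inv n3 nbt by (simp add: n_def)
      qed
      obtain x y where xy: "(x, y) \<in> set (dl W)" "(y, x) \<notin> set (dl W)"
        using exists_merge[OF inv Fne] by blast
      have "(y, x) \<in> map_darts W F"
        using xy(1) Inv_parts(8)[OF inv] by (simp add: map_darts_eq)
      then obtain f where fF: "f \<in> F" and yxf: "(y, x) \<in> set (dl f)"
        using xy(2) by (auto simp: map_darts_eq)
      obtain i where i: "i < n" "dl W ! i = (x, y)" using xy(1) by (auto simp: in_set_conv_nth n_def)
      have Wi: "W ! i = x" "W ! (Suc i mod n) = y" using i nth_dl[of i W] by (simp_all add: n_def)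
      define X where "X = rotate i W"
      have lX: "3 \<le> length X" using n3 by (simp add: X_def n_def)
      then have "X = X ! 0 # X ! 1 # X ! 2 # drop 3 X" by (rule len_ge3_eq)
      then have Xeq0: "X = X ! 0 # X ! 1 # drop 2 X"
        by (metis drop_Suc_Cons numeral_2_eq_2 numeral_3_eq_3 drop0 drop_Suc_Cons)
      have "X ! 0 = x" unfolding X_def by (subst nth_rotate) (use i Wi n_def in auto)
      moreover have "X ! 1 = y" unfolding X_def by (subst nth_rotate) (use n3 Wi n_def in auto)
      ultimately have Xeq: "X = x # y # drop 2 X" using Xeq0 by simp
      define R where "R = drop 2 X"
      have invX: "Inv (x # y # R) F" using Inv_rotate[OF inv, of i] Xeq by (simp add: X_def R_def)
      have fl: "length f = 4" "distinct f" using Inv_parts(5)[OF inv] fF by auto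
      obtain jj where jj: "jj < 4" "dl f ! jj = (y, x)" using yxf fl by (auto simp: in_set_conv_nth)
      have fj: "f ! jj = y" "f ! (Suc jj mod 4) = x" using jj nth_dl[of jj f] fl by simp_all
      define a where "a = rotate jj f ! 2"
      define b where "b = rotate jj f ! 3"
      have "rotate jj f = [rotate jj f ! 0, rotate jj f ! 1, rotate jj f ! 2, rotate jj f ! 3]"
        using fl by (intro len4_eq) simp
      moreover have "rotate jj f ! 0 = y" using fj jj fl by (simp add: nth_rotate)
      moreover have "rotate jj f ! 1 = x" using fj jj fl by (simp add: nth_rotate)
      ultimately have fr: "rotate jj f = [y, x, a, b]" by (simp add: a_def b_def)
      note ms = merge_step[OF invX fF fr]
      have mX: "map_darts (x # y # R) F = map_darts W F"
        using Xeq map_darts_rotate[of i W F] by (simp add: X_def R_def)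
      have lfF': "\<forall>g\<in>F - {f}. Lf L g" using less.prems(2) by simp
      have nh: "nullhom (map L (x # a # b # y # R))"
        using less.hyps[of "x # a # b # y # R" "F - {f}"] ms lfF' mX by simp
      have "Lf L f" using less.prems(2) fF by blast
      then have "Lf L (rotate jj f)" by (rule Lf_rotate[OF fl(1)])
      then have "L y = L a \<or> L x = L b" by (simp add: fr Lf_def)
      then have "nullhom (map L X)"
      proof
        assume ya: "L y = L a"
        have "nullhom (L x # L a # L b # L a # map L R)" using nh ya by simp
        then have "nullhom (rotate 1 (L x # L a # L b # L a # map L R))" by (rule nullhom_rotate)
        then have "nullhom (L a # L b # L a # (map L R @ [L x]))" by simp
        then have "nullhom (L a # (map L R @ [L x]))" by (rule nullhom_cancel)
        then have "nullhom (rotate 1 (L x # L a # map L R))" by simp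
        then have "nullhom (L x # L a # map L R)" by (simp only: nullhom_rotate_iff)
        then have "nullhom (L x # L y # map L R)" using ya by simp
        then have "nullhom (map L (x # y # R))" by simp
        then show ?thesis using Xeq by (simp add: R_def)
      next
        assume xb: "L x = L b"
        have "nullhom (L x # L a # L x # L y # map L R)" using nh xb by simp
        then have "nullhom (L x # L y # map L R)" by (rule nullhom_cancel)
        then have "nullhom (map L (x # y # R))" by simp
        then show ?thesis using Xeq by (simp add: R_def)
      qed
      then have "nullhom (rotate i (map L W))" by (simp add: X_def rotate_map)
      then show ?thesis by (simp add: nullhom_rotate_iff)
    qed
  qed
qed


lemma five_in_four:
  fixes c x0 x1 x2 x3 :: "int \<times> int"
  assumes inS: "c \<in> S" "x0 \<in> S" "x1 \<in> S" "x2 \<in> S" "x3 \<in> S" and S: "S = {0, 1} \<times> {0, 1}"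
    and ne: "x0 \<noteq> c" "x1 \<noteq> c" "x2 \<noteq> c" "x3 \<noteq> c" "x0 \<noteq> x1" "x1 \<noteq> x2" "x2 \<noteq> x3" "x3 \<noteq> x0"
  shows "x0 = x2 \<or> x1 = x3"
proof (rule ccontr)
  assume "\<not> (x0 = x2 \<or> x1 = x3)"
  then have n2: "x0 \<noteq> x2" "x1 \<noteq> x3" by auto
  have c4: "card {c, x0, x1, x2} = 4" using ne n2 by auto
  have cS: "card S = 4" by (simp add: S card_cartesian_product)
  have sub: "{c, x0, x1, x2} \<subseteq> S" using inS by auto
  have fS: "finite S" by (simp add: S)
  have "{c, x0, x1, x2} = S" using card_subset_eq[OF fS sub] c4 cS by simp
  then have "x3 \<in> {c, x0, x1, x2}" using inS(5) by simp
  then show False using ne n2 by auto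
qed

lemma face_Lf:
  assumes nq: "near_quadrangulation C Fs" and hb: "hue_bipartition C Fs h"
    and col: "four_coloring (patch_verts C Fs) (patch_adj C Fs) \<psi>" and fF: "f \<in> Fs"
  shows "Lf (\<lambda>v. (h v, \<psi> (Inl v))) f"
proof -
  have l4: "length f = 4" using nq fF by (simp add: near_quadrangulation_def)
  obtain f0 f1 f2 f3 where f: "f = [f0, f1, f2, f3]" using len4_ex[OF l4] by blast
  have df: "darts f = {(f0, f1), (f1, f2), (f2, f3), (f3, f0)}" by (simp add: f darts_dl dl_def)
  have adj: "H_adj C Fs f0 f1" "H_adj C Fs f1 f2" "H_adj C Fs f2 f3" "H_adj C Fs f3 f0"
    using fF df by (auto simp: H_adj_def map_darts_def)
  have sf: "set f \<subseteq> map_verts C Fs" using fF unfolding map_verts_def by blast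
  have inV: "f0 \<in> map_verts C Fs" "f1 \<in> map_verts C Fs" "f2 \<in> map_verts C Fs" "f3 \<in> map_verts C Fs"
    using sf f by auto
  have hv: "\<forall>v\<in>map_verts C Fs. h v \<in> {0, 1}" "\<forall>u v. H_adj C Fs u v \<longrightarrow> h u \<noteq> h v"
    using hb by (simp_all add: hue_bipartition_def)
  have h01: "h f0 \<in> {0, 1}" "h f1 \<in> {0, 1}" "h f2 \<in> {0, 1}" "h f3 \<in> {0, 1}"
    using hv(1) inV by auto
  have hne: "h f0 \<noteq> h f1" "h f1 \<noteq> h f2" "h f2 \<noteq> h f3"
    using hv(2) adj by auto
  have h02: "h f0 = h f2" using h01 hne by auto
  have h13: "h f1 = h f3" using h01 hne by auto
  have pv: "Inl f0 \<in> patch_verts C Fs" "Inl f1 \<in> patch_verts C Fs" "Inl f2 \<in> patch_verts C Fs"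
    "Inl f3 \<in> patch_verts C Fs" "Inr f \<in> patch_verts C Fs"
    using inV fF by (auto simp: patch_verts_def)
  have cin: "\<forall>x\<in>patch_verts C Fs. \<psi> x \<in> {0, 1} \<times> {0, 1}"
    and cne: "\<forall>x\<in>patch_verts C Fs. \<forall>y\<in>patch_verts C Fs. patch_adj C Fs x y \<longrightarrow> \<psi> x \<noteq> \<psi> y"
    using col by (simp_all add: four_coloring_def)
  have pa: "patch_adj C Fs (Inl f0) (Inl f1)" "patch_adj C Fs (Inl f1) (Inl f2)"
    "patch_adj C Fs (Inl f2) (Inl f3)" "patch_adj C Fs (Inl f3) (Inl f0)"
    using adj by (simp_all add: patch_adj_def)
  have pc: "patch_adj C Fs (Inl f0) (Inr f)" "patch_adj C Fs (Inl f1) (Inr f)"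
    "patch_adj C Fs (Inl f2) (Inr f)" "patch_adj C Fs (Inl f3) (Inr f)"
    using fF by (simp_all add: patch_adj_def f)
  have "\<psi> (Inl f0) = \<psi> (Inl f2) \<or> \<psi> (Inl f1) = \<psi> (Inl f3)"
  proof (rule five_in_four[of "\<psi> (Inr f)" "{0, 1} \<times> {0, 1}"])
    show "\<psi> (Inr f) \<in> {0, 1} \<times> {0, 1}" using cin pv(5) by blast
    show "\<psi> (Inl f0) \<in> {0, 1} \<times> {0, 1}" using cin pv(1) by blast
    show "\<psi> (Inl f1) \<in> {0, 1} \<times> {0, 1}" using cin pv(2) by blast
    show "\<psi> (Inl f2) \<in> {0, 1} \<times> {0, 1}" using cin pv(3) by blast
    show "\<psi> (Inl f3) \<in> {0, 1} \<times> {0, 1}" using cin pv(4) by blast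
    show "\<psi> (Inl f0) \<noteq> \<psi> (Inr f)" using cne pv(1) pv(5) pc(1) by blast
    show "\<psi> (Inl f1) \<noteq> \<psi> (Inr f)" using cne pv(2) pv(5) pc(2) by blast
    show "\<psi> (Inl f2) \<noteq> \<psi> (Inr f)" using cne pv(3) pv(5) pc(3) by blast
    show "\<psi> (Inl f3) \<noteq> \<psi> (Inr f)" using cne pv(4) pv(5) pc(4) by blast
    show "\<psi> (Inl f0) \<noteq> \<psi> (Inl f1)" using cne pv(1) pv(2) pa(1) by blast
    show "\<psi> (Inl f1) \<noteq> \<psi> (Inl f2)" using cne pv(2) pv(3) pa(2) by blast
    show "\<psi> (Inl f2) \<noteq> \<psi> (Inl f3)" using cne pv(3) pv(4) pa(3) by blast
    show "\<psi> (Inl f3) \<noteq> \<psi> (Inl f0)" using cne pv(4) pv(1) pa(4) by blast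
  qed simp
  then show ?thesis using h02 h13 by (auto simp: Lf_def f)
qed

lemma initial_Inv:
  assumes nq: "near_quadrangulation C Fs"
  shows "Inv C Fs"
proof -
  have pm: "plane_map C Fs" and l4: "\<forall>f\<in>Fs. length f = 4"
    using nq by (simp_all add: near_quadrangulation_def)
  note pmd = pm[unfolded plane_map_def]
  have finF: "finite Fs" and dC: "distinct C" and lC: "3 \<le> length C"
    and df: "\<forall>f\<in>Fs. distinct f \<and> 3 \<le> length f"
    and dj: "\<forall>f\<in>Fs. darts f \<inter> darts C = {}"
    and pdj: "\<forall>f\<in>Fs. \<forall>g\<in>Fs. f \<noteq> g \<longrightarrow> darts f \<inter> darts g = {}"
    and sym: "\<forall>u v. (u, v) \<in> map_darts C Fs \<longrightarrow> (v, u) \<in> map_darts C Fs"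
    and rot: "\<forall>v\<in>map_verts C Fs. \<forall>u z. H_adj C Fs v u \<and> H_adj C Fs v z \<longrightarrow>
         (rotation_step C Fs v)\<^sup>*\<^sup>* u z"
    and conn: "connected_on (map_verts C Fs) (H_adj C Fs)"
    and eul: "int (card (map_verts C Fs)) - int (card (map_darts C Fs) div 2) + int (card Fs + 1) = 2"
    using pmd by blast+
  have rs: "\<And>v. rotation_step C Fs v \<le> rotr C Fs v"
  proof (intro predicate2I)
    fix v x z assume "rotation_step C Fs v x z"
    then obtain w where w: "w \<in> insert C Fs" "(x, v) \<in> darts w" "(v, z) \<in> darts w"
      by (auto simp: rotation_step_def)
    have "distinct w" using w(1) dC df by auto
    then have "((x, v), (v, z)) \<in> set (dl (dl w))"
      using distinct_cdp w(2,3) by (simp add: darts_dl)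
    then show "rotr C Fs v x z" using w(1) by (auto simp: rotr_def)
  qed
  show ?thesis
    unfolding Inv_def
  proof (intro conjI)
    show "finite Fs" by (rule finF)
    show "2 \<le> length C" using lC by simp
    show "distinct (dl C)" using dC by (simp add: dl_def distinct_zipI1)
    show "\<forall>d\<in>set (dl C). fst d \<noteq> snd d"
    proof
      fix d assume "d \<in> set (dl C)"
      then show "fst d \<noteq> snd d" using distinct_noloop[OF dC, of "fst d" "snd d"] lC by simp
    qed
    show "\<forall>f\<in>Fs. distinct f \<and> length f = 4" using df l4 by simp
    show "\<forall>f\<in>Fs. set (dl f) \<inter> set (dl C) = {}" using dj by (simp add: darts_dl)
    show "\<forall>f\<in>Fs. \<forall>g\<in>Fs. f \<noteq> g \<longrightarrow> set (dl f) \<inter> set (dl g) = {}" using pdj by (simp add: darts_dl)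
    show "\<forall>u v. (u, v) \<in> map_darts C Fs \<longrightarrow> (v, u) \<in> map_darts C Fs" by (rule sym)
    show "\<forall>v\<in>map_verts C Fs. \<forall>x z. H_adj C Fs v x \<and> H_adj C Fs v z \<longrightarrow> (rotr C Fs v)\<^sup>*\<^sup>* x z"
    proof (intro ballI allI impI)
      fix v x z assume "v \<in> map_verts C Fs" "H_adj C Fs v x \<and> H_adj C Fs v z"
      then have "(rotation_step C Fs v)\<^sup>*\<^sup>* x z" using rot by blast
      then show "(rotr C Fs v)\<^sup>*\<^sup>* x z" using rtranclp_mono[OF rs[of v]] by blast
    qed
    show "connected_on (map_verts C Fs) (H_adj C Fs)" by (rule conn)
    show "int (card (map_verts C Fs)) - int (card (map_darts C Fs) div 2) + int (card Fs + 1) = 2"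
      by (rule eul)
  qed
qed

theorem corollary22:
  fixes C :: "'v list" and Fs :: "'v list set" and h :: "'v \<Rightarrow> int"
    and \<phi> :: "'v \<Rightarrow> int \<times> int" and \<psi> :: "('v + 'v list) \<Rightarrow> int \<times> int"
  assumes "near_quadrangulation C Fs"
    and "hue_bipartition C Fs h"
    and "four_coloring (set C) (cycle_adj C) \<phi>"
    and "viable (set C) (cycle_adj C) (\<lambda>v. patch_hue h (Inl v)) \<phi>"
    and "four_coloring (patch_verts C Fs) (patch_adj C Fs) \<psi>"
    and "\<forall>v\<in>set C. \<psi> (Inl v) = \<phi> v"
  shows "null_homotopic_on_cycle C (\<lambda>v. patch_hue h (Inl v)) \<phi>"
proof -
  define L where "L v = (h v, \<psi> (Inl v))" for v
  have inv: "Inv C Fs" by (rule initial_Inv[OF assms(1)])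
  have lf: "\<forall>f\<in>Fs. Lf L f"
  proof
    fix f assume "f \<in> Fs"
    then have "Lf (\<lambda>v. (h v, \<psi> (Inl v))) f" by (rule face_Lf[OF assms(1) assms(2) assms(5)])
    then show "Lf L f" by (simp add: L_def[abs_def])
  qed
  have nhL: "nullhom (map L C)" by (rule main_lemma[OF inv lf])
  show ?thesis
    unfolding null_homotopic_on_cycle_def
  proof (intro allI impI)
    fix g assume hom: "hom_to_T (set C) (cycle_adj C) (\<lambda>v. patch_hue h (Inl v)) \<phi> g"
    have hadj: "\<forall>x\<in>set C. \<forall>y\<in>set C. cycle_adj C x y \<longrightarrow> T_adj (g x) (g y)"
      and hhc: "\<forall>x\<in>set C. T_hue (g x) = patch_hue h (Inl x) \<and> T_col (g x) = \<phi> x"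
      using hom by (simp_all add: hom_to_T_def)
    have pt: "\<forall>x\<in>set C. tp (g x) = L x" using hhc assms(6) by (simp add: tp_def L_def patch_hue_def)
    have "map tp (map g C) = map L C" using pt by simp
    then have mt: "map L C = map tp (map g C)" by simp
    have "dl (map g C) = map (\<lambda>(x, y). (g x, g y)) (dl C)"
      by (simp add: dl_def rotate1_map zip_map_map)
    then have cw: "cwT (map g C)"
      unfolding cwT_def
    proof (intro ballI)
      fix p assume e: "dl (map g C) = map (\<lambda>(x, y). (g x, g y)) (dl C)" and p: "p \<in> set (dl (map g C))"
      then obtain x y where xy: "(x, y) \<in> set (dl C)" "p = (g x, g y)" by auto
      have "cycle_adj C x y" using xy(1) by (simp add: cycle_adj_def darts_dl)
      moreover have "x \<in> set C" "y \<in> set C" using dl_fst_in[OF xy(1)] by auto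
      ultimately show "T_adj (fst p) (snd p)" using hadj xy(2) by simp
    qed
    show "nullhom (map g C)" by (rule lift_nullhom[OF nhL mt cw])
  qed
qed

end
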